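(* Consider the $N$-layer cascade of the context and let $2\le n\le N$. Let $\mathcal{M}=\prod_{j=1}^M z_j$ be a monomial appearing in $s_{n-1,L_{n-1}}^{(\ell_0)}$ for some $\ell_0\ge1$ and in no derivative $s_{n-1,L_{n-1}}^{(\ell)}$ with $1\le\ell<\ell_0$, with coefficient $C_{\mathcal{M}}$ in $s_{n-1,L_{n-1}}^{(\ell_0)}$, and such that every $Z_j$ belongs to $\mathscr{S}^{(k)}$ or $\mathscr{S}^{(N+k)}$ for some $1\le k\le n-1$, or to $\mathscr{S}^{(2N+1)}$. Assume: $\mathcal{M}$ is square-free and does not involve two disjoint pairs of variables corresponding to species that react together; and if $s_{n-1,L_{n-1}}$ divides $\mathcal{M}$, then for all $j_1,j_2$ such that $Z_{j_1}$ and $Z_{j_2}$ react together, $Z_{j_1}=S_{n-1,L_{n-1}}$ or $Z_{j_2}=S_{n-1,L_{n-1}}$. Then $\widehat{\mathcal{M}}:=s_{n,L_n-1}\mathcal{M}$ appears in $s_{n,L_n}^{(\ell_0+2)}$ and in no derivative $s_{n,L_n}^{(\ell)}$ with $1\le\ell<\ell_0+2$, and its coefficient in $s_{n,L_n}^{(\ell_0+2)}$ is $c_{n,L_n}a_{n,L_n}C_{\mathcal{M}}$.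
   Context: Species are capital letters, concentrations lower-case letters. Mass-action system: $\dot{\mathbf{x}}=\sum_{y\to y'}k_{yy'}\mathbf{x}^y(y'-y)$. Total derivative: $\dot\varphi=\sum_i\frac{\partial\varphi}{\partial x_i}\dot x_i$ with $\dot x_i$ replaced by the right-hand side; $\varphi^{(\ell)}$ the $\ell$-th iterate, a polynomial in concentrations with coefficients polynomial in the rate constants; a monomial appears if its coefficient is nonzero. A non-intermediate $X_1$ reacts with a non-intermediate $X_2$ if there is a reaction $X_1+X_2\to W$ with $W$ intermediate. Cascade: $N\ge1$, $L_1,\dots,L_N\ge1$. Non-intermediate species $E$, pairwise distinct $F_1,\dots,F_N$, and $S_{m,j}$ ($1\le m\le N$, $0\le j\le L_m$), all distinct; intermediates $U_{m,j},V_{m,j}$ ($1\le j\le L_m$), all distinct. $S_{0,L_0}:=E$. For each $m$, $1\le j\le L_m$: $S_{m-1,L_{m-1}}+S_{m,j-1}\to U_{m,j}$ (rate $a_{m,j}$), $U_{m,j}\to S_{m-1,L_{m-1}}+S_{m,j-1}$ ($b_{m,j}$), $U_{m,j}\to S_{m-1,L_{m-1}}+S_{m,j}$ ($c_{m,j}$), $F_m+S_{m,j}\to V_{m,j}$ ($\tilde a_{m,j}$), $V_{m,j}\to F_m+S_{m,j}$ ($\tilde b_{m,j}$), $V_{m,j}\to F_m+S_{m,j-1}$ ($\tilde c_{m,j}$). Partition of non-intermediates: $\mathscr{S}^{(m)}=\{S_{m,0},\dots,S_{m,L_m}\}$, $\mathscr{S}^{(N+m)}=\{F_m\}$ ($1\le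 m\le N$), $\mathscr{S}^{(2N+1)}=\{E\}$. *)

theory Defs
  imports "HOL-Library.Poly_Mapping"
begin

datatype species = E | F nat | S nat nat | U nat nat | V nat nat

fun intermediate :: "species \<Rightarrow> bool" where
  "intermediate (U m j) = True"
| "intermediate (V m j) = True"
| "intermediate _ = False"

text \<open>Rate constants a, b, c, a~, b~, c~ as formal indeterminates.\<close>
datatype rate = Ra nat nat | Rb nat nat | Rc nat nat | Rat nat nat | Rbt nat nat | Rct nat nat

type_synonym rpoly = "(rate \<Rightarrow>\<^sub>0 nat) \<Rightarrow>\<^sub>0 int"

type_synonym cpoly = "(species \<Rightarrow>\<^sub>0 nat) \<Rightarrow>\<^sub>0 rpoly"

type_synonym complex = "species \<Rightarrow>\<^sub>0 nat"

definition rconst :: "rate \<Rightarrow> rpoly" where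
  "rconst r = Poly_Mapping.single (Poly_Mapping.single r 1) 1"

definition cvar :: "species \<Rightarrow> cpoly" where
  "cvar X = Poly_Mapping.single (Poly_Mapping.single X 1) 1"

text \<open>S_{m-1, L_{m-1}}, with the convention S_{0,L_0} = E.\<close>
definition Sprev :: "(nat \<Rightarrow> nat) \<Rightarrow> nat \<Rightarrow> species" where
  "Sprev L m = (if m = 1 then E else S (m - 1) (L (m - 1)))"

definition cpx2 :: "species \<Rightarrow> species \<Rightarrow> complex" where
  "cpx2 X Y = Poly_Mapping.single X 1 + Poly_Mapping.single Y 1"

definition cpx1 :: "species \<Rightarrow> complex" where
  "cpx1 X = Poly_Mapping.single X 1"

text \<open>Reactions as triples (reactant complex, product complex, rate constant).\<close>
definition reactions :: "nat \<Rightarrow> (nat \<Rightarrow> nat) \<Rightarrow> (complex \<times> complex \<times> rate) set" where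
  "reactions N L = (\<Union>m\<in>{1..N}. \<Union>j\<in>{1..L m}.
     { (cpx2 (Sprev L m) (S m (j - 1)), cpx1 (U m j), Ra m j),
       (cpx1 (U m j), cpx2 (Sprev L m) (S m (j - 1)), Rb m j),
       (cpx1 (U m j), cpx2 (Sprev L m) (S m j), Rc m j),
       (cpx2 (F m) (S m j), cpx1 (V m j), Rat m j),
       (cpx1 (V m j), cpx2 (F m) (S m j), Rbt m j),
       (cpx1 (V m j), cpx2 (F m) (S m (j - 1)), Rct m j) })"

definition species_set :: "nat \<Rightarrow> (nat \<Rightarrow> nat) \<Rightarrow> species set" where
  "species_set N L = {E} \<union> F ` {1..N}
     \<union> {S m j | m j. 1 \<le> m \<and> m \<le> N \<and> j \<le> L m}
     \<union> {U m j | m j. 1 \<le> m \<and> m \<le> N \<and> 1 \<le> j \<and> j \<le> L m}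
     \<union> {V m j | m j. 1 \<le> m \<and> m \<le> N \<and> 1 \<le> j \<and> j \<le> L m}"

text \<open>Mass-action right-hand side for species X:
  sum over reactions y \<rightarrow> y' of k x^y (y'_X - y_X).\<close>
definition rhs :: "nat \<Rightarrow> (nat \<Rightarrow> nat) \<Rightarrow> species \<Rightarrow> cpoly" where
  "rhs N L X = (\<Sum>(y, y', r)\<in>reactions N L.
      Poly_Mapping.single y
        (rconst r * of_int (int (Poly_Mapping.lookup y' X) - int (Poly_Mapping.lookup y X))))"

definition pderiv_sp :: "species \<Rightarrow> cpoly \<Rightarrow> cpoly" where
  "pderiv_sp X p = (\<Sum>m\<in>Poly_Mapping.keys p.
      Poly_Mapping.single (m - Poly_Mapping.single X 1)
        (of_nat (Poly_Mapping.lookup m X) * Poly_Mapping.lookup p m))"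

definition tder :: "nat \<Rightarrow> (nat \<Rightarrow> nat) \<Rightarrow> cpoly \<Rightarrow> cpoly" where
  "tder N L p = (\<Sum>X\<in>species_set N L. pderiv_sp X p * rhs N L X)"

definition iterder :: "nat \<Rightarrow> (nat \<Rightarrow> nat) \<Rightarrow> nat \<Rightarrow> species \<Rightarrow> cpoly" where
  "iterder N L l X = (tder N L ^^ l) (cvar X)"

definition appears :: "complex \<Rightarrow> cpoly \<Rightarrow> bool" where
  "appears M p \<longleftrightarrow> Poly_Mapping.lookup p M \<noteq> 0"

definition reacts :: "nat \<Rightarrow> (nat \<Rightarrow> nat) \<Rightarrow> species \<Rightarrow> species \<Rightarrow> bool" where
  "reacts N L X1 X2 \<longleftrightarrow> \<not> intermediate X1 \<and> \<not> intermediate X2 \<and>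
     (\<exists>W r. intermediate W \<and> (cpx2 X1 X2, cpx1 W, r) \<in> reactions N L)"

text \<open>Membership in the blocks S^(k) (k in 1..n-1), S^(N+k) = {F_k}, or S^(2N+1) = {E}.\<close>
definition in_upper_layers :: "(nat \<Rightarrow> nat) \<Rightarrow> nat \<Rightarrow> species \<Rightarrow> bool" where
  "in_upper_layers L n X \<longleftrightarrow> X = E \<or>
     (\<exists>k. 1 \<le> k \<and> k \<le> n - 1 \<and> (X = F k \<or> (\<exists>j. j \<le> L k \<and> X = S k j)))"

definition square_free :: "complex \<Rightarrow> bool" where
  "square_free M \<longleftrightarrow> (\<forall>X. Poly_Mapping.lookup M X \<le> 1)"

end

theory Submission
  imports Defs
begin


lemma lookup_single_mult:
  fixes a :: "'a::cancel_comm_monoid_add" and p :: "'a \<Rightarrow>\<^sub>0 'b::comm_semiring_1"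
  shows "Poly_Mapping.lookup (Poly_Mapping.single a c * p) (a + k) = c * Poly_Mapping.lookup p k"
proof -
  have "Poly_Mapping.lookup (Poly_Mapping.single a c * p) (a + k)
     = (\<Sum>l. (c when a = l) * (\<Sum>q. Poly_Mapping.lookup p q when a + k = l + q))"
    by (simp add: lookup_mult lookup_single)
  also have "\<dots> = (\<Sum>l. (c * (\<Sum>q. Poly_Mapping.lookup p q when a + k = l + q) when a = l))"
    by (simp add: when_mult)
  also have "\<dots> = c * (\<Sum>q. Poly_Mapping.lookup p q when a + k = a + q)"
    by simp
  also have "(\<lambda>q. Poly_Mapping.lookup p q when a + k = a + q) = (\<lambda>q. Poly_Mapping.lookup p q when q = k)"
    by (auto simp: fun_eq_iff when_def)
  finally show ?thesis by simp
qed

lemma lookup_single_mult_not: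
  fixes a :: "'a::cancel_comm_monoid_add" and p :: "'a \<Rightarrow>\<^sub>0 'b::comm_semiring_1"
  assumes "\<And>q. k \<noteq> a + q"
  shows "Poly_Mapping.lookup (Poly_Mapping.single a c * p) k = 0"
proof -
  have "Poly_Mapping.lookup (Poly_Mapping.single a c * p) k
     = (\<Sum>l. (c when a = l) * (\<Sum>q. Poly_Mapping.lookup p q when k = l + q))"
    by (simp add: lookup_mult lookup_single)
  also have "\<dots> = (\<Sum>l. (c * (\<Sum>q. Poly_Mapping.lookup p q when k = l + q) when a = l))"
    by (simp add: when_mult)
  also have "\<dots> = c * (\<Sum>q. Poly_Mapping.lookup p q when k = a + q)"
    by simp
  also have "(\<lambda>q. Poly_Mapping.lookup p q when k = a + q) = (\<lambda>q. 0)"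
    using assms by (auto simp: fun_eq_iff when_def)
  finally show ?thesis by simp
qed

lemma sum_single_nonzero:
  assumes "finite A" "a \<in> A" "\<And>b. b \<in> A \<Longrightarrow> b \<noteq> a \<Longrightarrow> f b = 0"
  shows "sum f A = f a"
proof -
  have "sum f A = f a + sum f (A - {a})" using assms by (simp add: sum.remove)
  also have "sum f (A - {a}) = 0" using assms by (intro sum.neutral) auto
  finally show ?thesis by simp
qed



fun rY :: "(nat \<Rightarrow> nat) \<Rightarrow> rate \<Rightarrow> complex" where
  "rY L (Ra m j) = cpx2 (Sprev L m) (S m (j - 1))"
| "rY L (Rb m j) = cpx1 (U m j)"
| "rY L (Rc m j) = cpx1 (U m j)"
| "rY L (Rat m j) = cpx2 (F m) (S m j)"
| "rY L (Rbt m j) = cpx1 (V m j)"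
| "rY L (Rct m j) = cpx1 (V m j)"

fun rY' :: "(nat \<Rightarrow> nat) \<Rightarrow> rate \<Rightarrow> complex" where
  "rY' L (Ra m j) = cpx1 (U m j)"
| "rY' L (Rb m j) = cpx2 (Sprev L m) (S m (j - 1))"
| "rY' L (Rc m j) = cpx2 (Sprev L m) (S m j)"
| "rY' L (Rat m j) = cpx1 (V m j)"
| "rY' L (Rbt m j) = cpx2 (F m) (S m j)"
| "rY' L (Rct m j) = cpx2 (F m) (S m (j - 1))"

fun rm :: "rate \<Rightarrow> nat" where
  "rm (Ra m j) = m" | "rm (Rb m j) = m" | "rm (Rc m j) = m"
| "rm (Rat m j) = m" | "rm (Rbt m j) = m" | "rm (Rct m j) = m"
fun rj :: "rate \<Rightarrow> nat" where
  "rj (Ra m j) = j" | "rj (Rb m j) = j" | "rj (Rc m j) = j"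
| "rj (Rat m j) = j" | "rj (Rbt m j) = j" | "rj (Rct m j) = j"

definition Rset :: "nat \<Rightarrow> (nat \<Rightarrow> nat) \<Rightarrow> rate set" where
  "Rset N L = (\<Union>m\<in>{1..N}. \<Union>j\<in>{1..L m}. {Ra m j, Rb m j, Rc m j, Rat m j, Rbt m j, Rct m j})"

lemma Rset_iff: "r \<in> Rset N L \<longleftrightarrow> 1 \<le> rm r \<and> rm r \<le> N \<and> 1 \<le> rj r \<and> rj r \<le> L (rm r)"
  by (cases r) (auto simp: Rset_def)

lemma finite_Rset: "finite (Rset N L)"
  unfolding Rset_def by auto

lemma reactions_eq: "reactions N L = (\<lambda>r. (rY L r, rY' L r, r)) ` Rset N L"
  unfolding reactions_def Rset_def image_UN by simp

lemma rhs_eq: "rhs N L X = (\<Sum>r\<in>Rset N L. Poly_Mapping.single (rY L r)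
   (rconst r * of_int (int (Poly_Mapping.lookup (rY' L r) X) - int (Poly_Mapping.lookup (rY L r) X))))"
proof -
  have inj: "inj_on (\<lambda>r. (rY L r, rY' L r, r)) (Rset N L)" by (auto intro: inj_onI)
  show ?thesis unfolding rhs_def reactions_eq by (simp add: sum.reindex[OF inj])
qed

lemma lookup_cpx1 [simp]: "Poly_Mapping.lookup (cpx1 a) Y = (if Y = a then 1 else 0)"
  by (simp add: cpx1_def lookup_single when_def)

lemma lookup_cpx2 [simp]: "Poly_Mapping.lookup (cpx2 a b) Y = (if Y = a then 1 else 0) + (if Y = b then 1 else 0)"
  by (simp add: cpx2_def lookup_single lookup_add when_def)

lemma cpx2_comm: "cpx2 a b = cpx2 b a"
  by (simp add: cpx2_def add.commute)

lemma finite_species_set: "finite (species_set N L)"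
proof -
  have "{S m j | m j. 1 \<le> m \<and> m \<le> N \<and> j \<le> L m} \<subseteq> (\<lambda>(m,j). S m j) ` (SIGMA m:{1..N}. {0..L m})" by auto
  moreover have "{U m j | m j. 1 \<le> m \<and> m \<le> N \<and> 1 \<le> j \<and> j \<le> L m} \<subseteq> (\<lambda>(m,j). U m j) ` (SIGMA m:{1..N}. {0..L m})" by auto
  moreover have "{V m j | m j. 1 \<le> m \<and> m \<le> N \<and> 1 \<le> j \<and> j \<le> L m} \<subseteq> (\<lambda>(m,j). V m j) ` (SIGMA m:{1..N}. {0..L m})" by auto
  moreover have "finite ((\<lambda>(m,j). S m j) ` (SIGMA m:{1..N}. {0..L m}))" by auto
  moreover have "finite ((\<lambda>(m,j). U m j) ` (SIGMA m:{1..N}. {0..L m}))" by auto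
  moreover have "finite ((\<lambda>(m,j). V m j) ` (SIGMA m:{1..N}. {0..L m}))" by auto
  ultimately show ?thesis unfolding species_set_def
    by (metis (no_types, lifting) finite.emptyI finite.insertI finite_Un finite_atLeastAtMost finite_imageI finite_subset)
qed



definition mon :: "species \<Rightarrow> complex" where "mon Y = Poly_Mapping.single Y 1"

lemma lookup_mon [simp]: "Poly_Mapping.lookup (mon Y) Z = (if Z = Y then 1 else 0)"
  by (simp add: mon_def lookup_single when_def)

lemma cvar_mon: "cvar Z = Poly_Mapping.single (mon Z) 1"
  by (simp add: cvar_def mon_def)

lemma cpx1_mon: "cpx1 Z = mon Z" by (simp add: cpx1_def mon_def)
lemma cpx2_mon: "cpx2 Y Z = mon Y + mon Z" by (simp add: cpx2_def mon_def)

lemma mon_minus_eq: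
  assumes "m - mon X = k" "1 \<le> Poly_Mapping.lookup m X"
  shows "m = k + mon X"
  using assms by (intro poly_mapping_eqI) (auto simp: lookup_add lookup_minus)

lemma pd_lookup:
  "Poly_Mapping.lookup (pderiv_sp X p) k = of_nat (Poly_Mapping.lookup k X + 1) * Poly_Mapping.lookup p (k + mon X)"
proof -
  have "Poly_Mapping.lookup (pderiv_sp X p) k
     = (\<Sum>m\<in>Poly_Mapping.keys p. (of_nat (Poly_Mapping.lookup m X) * Poly_Mapping.lookup p m when m - mon X = k))"
    by (simp add: pderiv_sp_def lookup_sum lookup_single mon_def)
  also have "\<dots> = (\<Sum>m\<in>Poly_Mapping.keys p. (if m = k + mon X then of_nat (Poly_Mapping.lookup m X) * Poly_Mapping.lookup p m else 0))"
  proof (rule sum.cong[OF refl])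
    fix m
    show "(of_nat (Poly_Mapping.lookup m X) * Poly_Mapping.lookup p m when m - mon X = k) =
          (if m = k + mon X then of_nat (Poly_Mapping.lookup m X) * Poly_Mapping.lookup p m else 0)"
    proof (cases "m = k + mon X")
      case True then show ?thesis by simp
    next
      case False
      then have "m - mon X = k \<Longrightarrow> Poly_Mapping.lookup m X = 0"
        using mon_minus_eq[of m X k] by linarith
      with False show ?thesis by (auto simp: when_def)
    qed
  qed
  also have "\<dots> = of_nat (Poly_Mapping.lookup k X + 1) * Poly_Mapping.lookup p (k + mon X)"
    by (auto simp: lookup_add in_keys_iff)
  finally show ?thesis .
qed

lemma pd_add: "pderiv_sp X (p + q) = pderiv_sp X p + pderiv_sp X q"
  by (intro poly_mapping_eqI) (simp add: pd_lookup lookup_add algebra_simps)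

lemma pd_zero: "pderiv_sp X 0 = 0"
  by (intro poly_mapping_eqI) (simp add: pd_lookup)

lemma lookup_scal: "Poly_Mapping.lookup (Poly_Mapping.single 0 r * (p::cpoly)) k = r * Poly_Mapping.lookup p k"
  using lookup_single_mult[of 0 r p k] by simp

lemma pd_scal: "pderiv_sp X (Poly_Mapping.single 0 r * p) = Poly_Mapping.single 0 r * pderiv_sp X p"
  by (intro poly_mapping_eqI) (simp only: pd_lookup lookup_scal, simp add: mult.left_commute)

lemma lookup_mon_mult:
  "Poly_Mapping.lookup (Poly_Mapping.single (mon w) c * (p::cpoly)) k =
    (if 1 \<le> Poly_Mapping.lookup k w then c * Poly_Mapping.lookup p (k - mon w) else 0)"
proof (cases "1 \<le> Poly_Mapping.lookup k w")
  case True
  then have "k = mon w + (k - mon w)"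
    by (intro poly_mapping_eqI) (auto simp: lookup_add lookup_minus)
  then have "Poly_Mapping.lookup (Poly_Mapping.single (mon w) c * p) k = c * Poly_Mapping.lookup p (k - mon w)"
    by (metis lookup_single_mult)
  with True show ?thesis by simp
next
  case False
  have "\<And>q. k \<noteq> mon w + q"
  proof
    fix q assume "k = mon w + q"
    then have "Poly_Mapping.lookup k w = 1 + Poly_Mapping.lookup q w" by (simp add: lookup_add)
    with False show False by simp
  qed
  with False show ?thesis by (simp add: lookup_single_mult_not)
qed

lemma kmon_eq: "(k + mon X = mon Z) \<longleftrightarrow> (X = Z \<and> k = 0)"
proof
  assume h: "k + mon X = mon Z"
  then have "Poly_Mapping.lookup (k + mon X) X = Poly_Mapping.lookup (mon Z) X" by simp
  then have "X = Z" by (auto simp: lookup_add split: if_splits)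
  with h show "X = Z \<and> k = 0" by (metis add_0 add_right_cancel)
qed auto

lemma kmon_eq': "(mon Z = k + mon X) \<longleftrightarrow> (X = Z \<and> k = 0)"
  using kmon_eq by metis

lemma pd_cvar: "pderiv_sp X (cvar Z) = (if X = Z then 1 else 0)"
  by (intro poly_mapping_eqI) (auto simp: pd_lookup cvar_mon lookup_single kmon_eq kmon_eq' when_def lookup_one)

lemma pd_mon_mult:
  "pderiv_sp X (Poly_Mapping.single (mon w) 1 * p) =
     pderiv_sp X (cvar w) * p + Poly_Mapping.single (mon w) 1 * pderiv_sp X p"
proof (rule poly_mapping_eqI)
  fix k
  show "Poly_Mapping.lookup (pderiv_sp X (Poly_Mapping.single (mon w) 1 * p)) k =
     Poly_Mapping.lookup (pderiv_sp X (cvar w) * p + Poly_Mapping.single (mon w) 1 * pderiv_sp X p) k"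
  proof (cases "X = w")
    case True
    have e: "k + mon w - mon w = k"
      by (intro poly_mapping_eqI) (auto simp: lookup_add lookup_minus)
    show ?thesis
    proof (cases "1 \<le> Poly_Mapping.lookup k w")
      case c: True
      have e2: "k - mon w + mon w = k"
        using c by (intro poly_mapping_eqI) (auto simp: lookup_add lookup_minus)
      have e3: "Poly_Mapping.lookup (k - mon w) w = Poly_Mapping.lookup k w - 1"
        by (auto simp: lookup_minus)
      have "Poly_Mapping.lookup (pderiv_sp X (Poly_Mapping.single (mon w) 1 * p)) k
          = of_nat (Poly_Mapping.lookup k w + 1) * Poly_Mapping.lookup p k"
        unfolding pd_lookup lookup_mon_mult True by (simp add: lookup_add e)
      also have "\<dots> = Poly_Mapping.lookup p k + of_nat (Poly_Mapping.lookup k w) * Poly_Mapping.lookup p k"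
        by (simp add: distrib_right)
      also have "\<dots> = Poly_Mapping.lookup (pderiv_sp X (cvar w) * p + Poly_Mapping.single (mon w) 1 * pderiv_sp X p) k"
        unfolding lookup_add pd_cvar True lookup_mon_mult pd_lookup using c by (simp add: e2 e3)
      finally show ?thesis .
    next
      case c: False
      then have z: "Poly_Mapping.lookup k w = 0" by simp
      have "Poly_Mapping.lookup (pderiv_sp X (Poly_Mapping.single (mon w) 1 * p)) k
          = Poly_Mapping.lookup p k"
        unfolding pd_lookup lookup_mon_mult True by (simp add: lookup_add e z)
      also have "\<dots> = Poly_Mapping.lookup (pderiv_sp X (cvar w) * p + Poly_Mapping.single (mon w) 1 * pderiv_sp X p) k"
        unfolding lookup_add pd_cvar True lookup_mon_mult using c by simp
      finally show ?thesis .
    qed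
  next
    case False
    have e: "Suc 0 \<le> Poly_Mapping.lookup k w \<Longrightarrow> k + mon X - mon w = k - mon w + mon X"
      using False by (intro poly_mapping_eqI) (auto simp: lookup_add lookup_minus)
    have e2: "Poly_Mapping.lookup (k - mon w) X = Poly_Mapping.lookup k X"
      using False by (auto simp: lookup_minus)
    have e3: "Poly_Mapping.lookup (k + mon X) w = Poly_Mapping.lookup k w"
      using False by (auto simp: lookup_add)
    show ?thesis using False
      by (simp only: pd_cvar pd_lookup lookup_add lookup_mon_mult e2 e3, simp add: e)
  qed
qed

abbreviation T where "T N L \<equiv> tder N L"

lemma T_add: "tder N L (p + q) = tder N L p + tder N L q"
  by (simp add: tder_def pd_add distrib_right sum.distrib)

lemma T_zero: "tder N L 0 = 0"
  by (simp add: tder_def pd_zero)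

lemma T_scal: "tder N L (Poly_Mapping.single 0 r * p) = Poly_Mapping.single 0 r * tder N L p"
  by (simp add: tder_def pd_scal sum_distrib_left mult.assoc)

lemma Tpow_add: "(tder N L ^^ k) (p + q) = (tder N L ^^ k) p + (tder N L ^^ k) q"
  by (induction k) (simp_all add: T_add)

lemma Tpow_zero: "(tder N L ^^ k) 0 = 0"
  by (induction k) (simp_all add: T_zero)

lemma Tpow_scal: "(tder N L ^^ k) (Poly_Mapping.single 0 r * p) = Poly_Mapping.single 0 r * (tder N L ^^ k) p"
  by (induction k) (simp_all add: T_scal)

lemma Tpow_sum: "(tder N L ^^ k) (sum f A) = (\<Sum>a\<in>A. (tder N L ^^ k) (f a))"
  by (induction A rule: infinite_finite_induct) (simp_all add: Tpow_add Tpow_zero)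

lemma T_cvar:
  assumes "Z \<in> species_set N L"
  shows "tder N L (cvar Z) = rhs N L Z"
proof -
  have "tder N L (cvar Z) = (\<Sum>X\<in>species_set N L. (if X = Z then rhs N L Z else 0))"
    unfolding tder_def by (intro sum.cong) (auto simp: pd_cvar)
  also have "\<dots> = rhs N L Z" using assms finite_species_set by simp
  finally show ?thesis .
qed

lemma T_mon_mult:
  assumes "w \<in> species_set N L"
  shows "tder N L (Poly_Mapping.single (mon w) 1 * p) = rhs N L w * p + Poly_Mapping.single (mon w) 1 * tder N L p"
proof -
  have "tder N L (Poly_Mapping.single (mon w) 1 * p) =
    (\<Sum>X\<in>species_set N L. pderiv_sp X (cvar w) * rhs N L X) * p + Poly_Mapping.single (mon w) 1 * tder N L p"
    unfolding tder_def pd_mon_mult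
    by (simp add: distrib_right sum.distrib sum_distrib_left sum_distrib_right algebra_simps)
  also have "(\<Sum>X\<in>species_set N L. pderiv_sp X (cvar w) * rhs N L X) = rhs N L w"
    using T_cvar[OF assms] by (simp add: tder_def)
  finally show ?thesis .
qed



lemma keys_pd: "Poly_Mapping.keys (pderiv_sp X p) \<subseteq> {m - mon X | m. m \<in> Poly_Mapping.keys p \<and> 1 \<le> Poly_Mapping.lookup m X}"
proof
  fix k assume "k \<in> Poly_Mapping.keys (pderiv_sp X p)"
  then have "Poly_Mapping.lookup p (k + mon X) \<noteq> 0" by (auto simp: in_keys_iff pd_lookup)
  moreover have "k + mon X - mon X = k" by (intro poly_mapping_eqI) (simp add: lookup_add lookup_minus)
  moreover have "1 \<le> Poly_Mapping.lookup (k + mon X) X" by (simp add: lookup_add)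
  ultimately show "k \<in> {m - mon X | m. m \<in> Poly_Mapping.keys p \<and> 1 \<le> Poly_Mapping.lookup m X}"
    by (auto simp: in_keys_iff intro!: exI[of _ "k + mon X"])
qed

lemma keys_rhs: "Poly_Mapping.keys (rhs N L X) \<subseteq> {rY L r | r. r \<in> Rset N L \<and> Poly_Mapping.lookup (rY' L r) X \<noteq> Poly_Mapping.lookup (rY L r) X}"
proof
  fix k assume "k \<in> Poly_Mapping.keys (rhs N L X)"
  then have "k \<in> (\<Union>r\<in>Rset N L. Poly_Mapping.keys (Poly_Mapping.single (rY L r)
   (rconst r * of_int (int (Poly_Mapping.lookup (rY' L r) X) - int (Poly_Mapping.lookup (rY L r) X)))))"
    unfolding rhs_eq by (rule subsetD[OF keys_sum])
  then obtain r where r: "r \<in> Rset N L" and k: "k \<in> Poly_Mapping.keys (Poly_Mapping.single (rY L r)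
   (rconst r * of_int (int (Poly_Mapping.lookup (rY' L r) X) - int (Poly_Mapping.lookup (rY L r) X))))"
    by (rule UN_E)
  then have "k = rY L r" and "Poly_Mapping.lookup (rY' L r) X \<noteq> Poly_Mapping.lookup (rY L r) X"
    by (auto split: if_splits)
  with r show "k \<in> {rY L r | r. r \<in> Rset N L \<and> Poly_Mapping.lookup (rY' L r) X \<noteq> Poly_Mapping.lookup (rY L r) X}"
    by (intro CollectI exI[of _ r]) simp
qed

lemma keys_T: "Poly_Mapping.keys (tder N L p) \<subseteq> {m - mon X + rY L r | m X r. m \<in> Poly_Mapping.keys p \<and> 1 \<le> Poly_Mapping.lookup m X \<and> r \<in> Rset N L \<and> Poly_Mapping.lookup (rY' L r) X \<noteq> Poly_Mapping.lookup (rY L r) X}"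
proof
  fix k assume "k \<in> Poly_Mapping.keys (tder N L p)"
  then have "k \<in> (\<Union>X\<in>species_set N L. Poly_Mapping.keys (pderiv_sp X p * rhs N L X))"
    unfolding tder_def by (rule subsetD[OF keys_sum])
  then obtain X where "k \<in> Poly_Mapping.keys (pderiv_sp X p * rhs N L X)"
    by (rule UN_E)
  then have "k \<in> {a + b | a b. a \<in> Poly_Mapping.keys (pderiv_sp X p) \<and> b \<in> Poly_Mapping.keys (rhs N L X)}"
    by (rule subsetD[OF keys_mult])
  then obtain a b where ab: "k = a + b" "a \<in> Poly_Mapping.keys (pderiv_sp X p)" "b \<in> Poly_Mapping.keys (rhs N L X)"
    by blast
  from ab(2) obtain m where m: "a = m - mon X" "m \<in> Poly_Mapping.keys p" "1 \<le> Poly_Mapping.lookup m X"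
    using keys_pd[of X p] by blast
  from ab(3) obtain r where r: "b = rY L r" "r \<in> Rset N L" "Poly_Mapping.lookup (rY' L r) X \<noteq> Poly_Mapping.lookup (rY L r) X"
    using keys_rhs[of N L X] by blast
  show "k \<in> {m - mon X + rY L r | m X r. m \<in> Poly_Mapping.keys p \<and> 1 \<le> Poly_Mapping.lookup m X \<and> r \<in> Rset N L \<and> Poly_Mapping.lookup (rY' L r) X \<noteq> Poly_Mapping.lookup (rY L r) X}"
    using ab m r by (intro CollectI exI[of _ m] exI[of _ X] exI[of _ r]) simp
qed

definition mv :: "(nat \<Rightarrow> nat) \<Rightarrow> (species \<Rightarrow> nat) \<Rightarrow> species \<Rightarrow> rate \<Rightarrow> species \<Rightarrow> nat" where
  "mv L g X r = (\<lambda>Y. g Y - (if Y = X then 1 else 0) + Poly_Mapping.lookup (rY L r) Y)"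

lemma lookup_move: "Poly_Mapping.lookup (m - mon X + rY L r) = mv L (Poly_Mapping.lookup m) X r"
  by (auto simp: fun_eq_iff mv_def lookup_add lookup_minus)

definition closedP :: "nat \<Rightarrow> (nat \<Rightarrow> nat) \<Rightarrow> ((species \<Rightarrow> nat) \<Rightarrow> bool) \<Rightarrow> bool" where
  "closedP N L P \<longleftrightarrow> (\<forall>g X r. P g \<longrightarrow> 1 \<le> g X \<longrightarrow> r \<in> Rset N L \<longrightarrow>
      Poly_Mapping.lookup (rY' L r) X \<noteq> Poly_Mapping.lookup (rY L r) X \<longrightarrow> P (mv L g X r))"

lemma keys_T_closed:
  assumes "closedP N L P" "\<forall>m\<in>Poly_Mapping.keys p. P (Poly_Mapping.lookup m)"
  shows "\<forall>m\<in>Poly_Mapping.keys (tder N L p). P (Poly_Mapping.lookup m)"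
proof
  fix k assume "k \<in> Poly_Mapping.keys (tder N L p)"
  then have "k \<in> {m - mon X + rY L r | m X r. m \<in> Poly_Mapping.keys p \<and> 1 \<le> Poly_Mapping.lookup m X \<and> r \<in> Rset N L \<and> Poly_Mapping.lookup (rY' L r) X \<noteq> Poly_Mapping.lookup (rY L r) X}"
    by (rule subsetD[OF keys_T])
  then obtain m X r where "k = m - mon X + rY L r" "m \<in> Poly_Mapping.keys p" "1 \<le> Poly_Mapping.lookup m X"
     "r \<in> Rset N L" "Poly_Mapping.lookup (rY' L r) X \<noteq> Poly_Mapping.lookup (rY L r) X"
    by blast
  with assms show "P (Poly_Mapping.lookup k)" unfolding closedP_def by (simp add: lookup_move)
qed

lemma keys_Tpow_closed:
  assumes "closedP N L P" "\<forall>m\<in>Poly_Mapping.keys p. P (Poly_Mapping.lookup m)"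
  shows "\<forall>m\<in>Poly_Mapping.keys ((tder N L ^^ k) p). P (Poly_Mapping.lookup m)"
  using assms(2) by (induction k) (auto dest: keys_T_closed[OF assms(1)])

lemma lookup_Tpow_closed:
  assumes "closedP N L P" "\<forall>m\<in>Poly_Mapping.keys p. P (Poly_Mapping.lookup m)" "\<not> P (Poly_Mapping.lookup t)"
  shows "Poly_Mapping.lookup ((tder N L ^^ k) p) t = 0"
  using keys_Tpow_closed[OF assms(1,2), of k] assms(3) by (auto simp: in_keys_iff)



fun layer :: "species \<Rightarrow> nat" where
  "layer E = 0" | "layer (F k) = k" | "layer (S k j) = k" | "layer (U k j) = k" | "layer (V k j) = k"

lemma layer_Sprev: "1 \<le> k \<Longrightarrow> layer (Sprev L k) = k - 1"
  by (simp add: Sprev_def)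

lemma int_Sprev [simp]: "\<not> intermediate (Sprev L k)"
  by (simp add: Sprev_def)

definition form :: "nat \<Rightarrow> (nat \<Rightarrow> nat) \<Rightarrow> nat \<Rightarrow> nat \<Rightarrow> species \<Rightarrow> species \<Rightarrow> species \<Rightarrow> bool" where
  "form N L k j P Q W \<longleftrightarrow> 1 \<le> k \<and> k \<le> N \<and> 1 \<le> j \<and> j \<le> L k \<and>
     ((W = U k j \<and> P = Sprev L k \<and> Q = S k (j - 1)) \<or> (W = V k j \<and> P = F k \<and> Q = S k j))"

definition dissP :: "nat \<Rightarrow> (nat \<Rightarrow> nat) \<Rightarrow> species \<Rightarrow> species \<Rightarrow> bool" where
  "dissP N L W X \<longleftrightarrow> (\<exists>k j. 1 \<le> k \<and> k \<le> N \<and> 1 \<le> j \<and> j \<le> L k \<and>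
     ((W = U k j \<and> (X = Sprev L k \<or> X = S k (j - 1) \<or> X = S k j)) \<or>
      (W = V k j \<and> (X = F k \<or> X = S k j \<or> X = S k (j - 1)))))"

lemma rY_mon: "rY L r = (case r of Ra m j \<Rightarrow> mon (Sprev L m) + mon (S m (j - 1)) | Rb m j \<Rightarrow> mon (U m j)
   | Rc m j \<Rightarrow> mon (U m j) | Rat m j \<Rightarrow> mon (F m) + mon (S m j) | Rbt m j \<Rightarrow> mon (V m j) | Rct m j \<Rightarrow> mon (V m j))"
  by (cases r) (simp_all add: cpx1_mon cpx2_mon)

lemma movecases:
  assumes r: "r \<in> Rset N L" and d: "Poly_Mapping.lookup (rY' L r) X \<noteq> Poly_Mapping.lookup (rY L r) X"
  shows "1 \<le> Poly_Mapping.lookup (rY L r) X \<or>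
    (\<exists>k j P Q. form N L k j P Q X \<and> rY L r = mon P + mon Q) \<or>
    (\<exists>W. intermediate W \<and> dissP N L W X \<and> rY L r = mon W)"
proof (cases r)
  case (Ra m j)
  show ?thesis
  proof (cases "X = U m j")
    case True
    then have "form N L m j (Sprev L m) (S m (j - 1)) X" using r Ra by (auto simp: Rset_iff form_def)
    then show ?thesis using Ra by (auto simp: cpx2_mon)
  next
    case False
    then show ?thesis using d Ra by (auto simp: cpx1_mon cpx2_mon lookup_add split: if_splits)
  qed
next
  case (Rb m j)
  show ?thesis
  proof (cases "X = U m j")
    case True
    then show ?thesis using Rb by (auto simp: cpx1_mon)
  next
    case False
    then have "dissP N L (U m j) X" using r Rb d by (auto simp: Rset_iff dissP_def cpx1_mon cpx2_mon lookup_add split: if_splits)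
    then show ?thesis using Rb by (intro disjI2 exI[of _ "U m j"]) (auto simp: cpx1_mon)
  qed
next
  case (Rc m j)
  show ?thesis
  proof (cases "X = U m j")
    case True
    then show ?thesis using Rc by (auto simp: cpx1_mon)
  next
    case False
    then have "dissP N L (U m j) X" using r Rc d by (auto simp: Rset_iff dissP_def cpx1_mon cpx2_mon lookup_add split: if_splits)
    then show ?thesis using Rc by (intro disjI2 exI[of _ "U m j"]) (auto simp: cpx1_mon)
  qed
next
  case (Rat m j)
  show ?thesis
  proof (cases "X = V m j")
    case True
    then have "form N L m j (F m) (S m j) X" using r Rat by (auto simp: Rset_iff form_def)
    then show ?thesis using Rat by (auto simp: cpx2_mon)
  next
    case False
    then show ?thesis using d Rat by (auto simp: cpx1_mon cpx2_mon lookup_add split: if_splits)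
  qed
next
  case (Rbt m j)
  show ?thesis
  proof (cases "X = V m j")
    case True
    then show ?thesis using Rbt by (auto simp: cpx1_mon)
  next
    case False
    then have "dissP N L (V m j) X" using r Rbt d by (auto simp: Rset_iff dissP_def cpx1_mon cpx2_mon lookup_add split: if_splits)
    then show ?thesis using Rbt by (intro disjI2 exI[of _ "V m j"]) (auto simp: cpx1_mon)
  qed
next
  case (Rct m j)
  show ?thesis
  proof (cases "X = V m j")
    case True
    then show ?thesis using Rct by (auto simp: cpx1_mon)
  next
    case False
    then have "dissP N L (V m j) X" using r Rct d by (auto simp: Rset_iff dissP_def cpx1_mon cpx2_mon lookup_add split: if_splits)
    then show ?thesis using Rct by (intro disjI2 exI[of _ "V m j"]) (auto simp: cpx1_mon)
  qed
qed

lemma form_props: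
  assumes "form N L k j P Q W"
  shows "intermediate W" "\<not> intermediate P" "\<not> intermediate Q" "layer W = k" "layer Q = k" "layer P \<le> k"
  using assms by (auto simp: form_def layer_Sprev)

lemma dissP_props:
  assumes "dissP N L W X"
  shows "intermediate W" "\<not> intermediate X" "layer X \<le> layer W"
  using assms by (auto simp: dissP_def layer_Sprev)

lemma mv_ge: "Y \<noteq> X \<Longrightarrow> g Y \<le> mv L g X r Y"
  by (simp add: mv_def)

lemma mv_ge_y: "1 \<le> g X \<Longrightarrow> Poly_Mapping.lookup (rY L r) Y \<le> mv L g X r Y"
  unfolding mv_def by (cases "Y = X") auto

lemma mv_grow: "1 \<le> Poly_Mapping.lookup (rY L r) X \<Longrightarrow> 1 \<le> g X \<Longrightarrow> g Y \<le> mv L g X r Y"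
  unfolding mv_def by (cases "Y = X") auto

definition lep :: "complex \<Rightarrow> (species \<Rightarrow> nat) \<Rightarrow> bool" where
  "lep c g \<longleftrightarrow> (\<forall>Y. Poly_Mapping.lookup c Y \<le> g Y)"

lemma lep_mono: "lep c g \<Longrightarrow> (\<forall>Y. g Y \<le> g' Y) \<Longrightarrow> lep c g'"
  unfolding lep_def using order_trans by blast

lemma lep_persist: "lep c g \<Longrightarrow> Poly_Mapping.lookup c X + 1 \<le> g X \<Longrightarrow> lep c (mv L g X r)"
  unfolding lep_def mv_def by (auto simp: le_diff_conv intro: le_add1 order.trans)

lemma lep_replace:
  assumes "lep (c1 + c2) g" "1 \<le> Poly_Mapping.lookup c1 X" "lep c1' (Poly_Mapping.lookup (rY L r))"
  shows "lep (c1' + c2) (mv L g X r)"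
  unfolding lep_def mv_def
proof
  fix Y
  have a: "Poly_Mapping.lookup c1 Y + Poly_Mapping.lookup c2 Y \<le> g Y" using assms(1) by (auto simp: lep_def lookup_add)
  have b: "Poly_Mapping.lookup c1' Y \<le> Poly_Mapping.lookup (rY L r) Y" using assms(3) by (auto simp: lep_def)
  show "Poly_Mapping.lookup (c1' + c2) Y \<le> g Y - (if Y = X then 1 else 0) + Poly_Mapping.lookup (rY L r) Y"
    using a b assms(2) by (auto simp: lookup_add)
qed



locale casc =
  fixes N :: nat and L :: "nat \<Rightarrow> nat" and n :: nat
  assumes n2: "2 \<le> n" and nN: "n \<le> N" and Lpos: "\<And>m. 1 \<le> m \<Longrightarrow> m \<le> N \<Longrightarrow> 1 \<le> L m"
begin

abbreviation "A \<equiv> S (n - 1) (L (n - 1))"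
abbreviation "xx \<equiv> S n (L n)"
abbreviation "ww \<equiv> S n (L n - 1)"
abbreviation "uu \<equiv> U n (L n)"

lemma A_Sprev: "Sprev L n = A" using n2 by (simp add: Sprev_def)

definition Dsp :: "species \<Rightarrow> bool" where "Dsp Y \<longleftrightarrow> n \<le> layer Y"
definition dead :: "species \<Rightarrow> bool" where
  "dead Y \<longleftrightarrow> n + 1 \<le> layer Y \<or> Y = F n \<or> (\<exists>j. Y = V n j)"
definition Rsp :: "species \<Rightarrow> bool" where
  "Rsp Y \<longleftrightarrow> (\<exists>j. Y = U n j) \<or> (\<exists>j. Y = S n j \<and> j \<noteq> L n - 1)"
definition upint :: "species \<Rightarrow> bool" where "upint Y \<longleftrightarrow> intermediate Y \<and> layer Y < n"
definition upreact :: "species \<Rightarrow> species \<Rightarrow> bool" where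
  "upreact P Q \<longleftrightarrow> (\<exists>k j. 1 \<le> k \<and> k < n \<and> 1 \<le> j \<and> j \<le> L k \<and>
      ((P = Sprev L k \<and> Q = S k (j - 1)) \<or> (P = F k \<and> Q = S k j)))"
definition wit :: "complex \<Rightarrow> bool" where
  "wit c \<longleftrightarrow> c = mon A \<or> (\<exists>Z. upint Z \<and> c = mon Z) \<or> (\<exists>P Q. upreact P Q \<and> c = mon P + mon Q)"

definition hasD where "hasD g \<longleftrightarrow> (\<exists>Y. Dsp Y \<and> 1 \<le> g Y)"
definition z2 where "z2 g \<longleftrightarrow> (\<exists>Y1 Y2. Dsp Y1 \<and> Dsp Y2 \<and> lep (mon Y1 + mon Y2) g)"
definition zdead where "zdead g \<longleftrightarrow> (\<exists>Y. dead Y \<and> 1 \<le> g Y)"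
definition hasw where "hasw g \<longleftrightarrow> (\<exists>c. wit c \<and> lep c g)"
definition hasR where "hasR g \<longleftrightarrow> (\<exists>Y. Rsp Y \<and> 1 \<le> g Y)"
definition zR where "zR g \<longleftrightarrow> hasR g \<and> hasw g"
definition w2 where "w2 g \<longleftrightarrow> (\<exists>c1 c2. wit c1 \<and> wit c2 \<and> lep (c1 + c2) g)"
definition zw2 where "zw2 g \<longleftrightarrow> hasD g \<and> w2 g"
definition ZZ where "ZZ g \<longleftrightarrow> z2 g \<or> zdead g \<or> zR g \<or> zw2 g"

definition mvok where "mvok g X r \<longleftrightarrow> 1 \<le> g X \<and> r \<in> Rset N L \<and>
   Poly_Mapping.lookup (rY' L r) X \<noteq> Poly_Mapping.lookup (rY L r) X"

definition stable :: "(species \<Rightarrow> bool) \<Rightarrow> bool" where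
  "stable Pi \<longleftrightarrow> (\<forall>k j P Q W. form N L k j P Q W \<longrightarrow> Pi W \<longrightarrow> Pi P \<or> Pi Q) \<and>
                 (\<forall>W X. dissP N L W X \<longrightarrow> Pi X \<longrightarrow> Pi W)"

lemma stable_Dsp: "stable Dsp"
  unfolding stable_def Dsp_def
  using form_props dissP_props by (metis order.trans)

lemma stable_dead: "stable dead"
  unfolding stable_def
proof (intro conjI allI impI)
  fix k j P Q W assume f: "form N L k j P Q W" and d: "dead W"
  then show "dead P \<or> dead Q"
    by (auto simp: form_def dead_def)
next
  fix W X assume f: "dissP N L W X" and d: "dead X"
  from f obtain k j where kj: "1 \<le> k" "k \<le> N" "1 \<le> j" "j \<le> L k"
     "(W = U k j \<and> (X = Sprev L k \<or> X = S k (j - 1) \<or> X = S k j)) \<or>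
      (W = V k j \<and> (X = F k \<or> X = S k j \<or> X = S k (j - 1)))"
    unfolding dissP_def by blast
  show "dead W"
    using kj d by (auto simp: dead_def Sprev_def split: if_splits)
qed

lemma stable_step:
  assumes st: "stable Pi" and ok: "mvok g X r" and p: "Pi X"
  shows "\<exists>T. Pi T \<and> 1 \<le> Poly_Mapping.lookup (rY L r) T"
proof -
  from ok have r: "r \<in> Rset N L" "Poly_Mapping.lookup (rY' L r) X \<noteq> Poly_Mapping.lookup (rY L r) X"
    by (auto simp: mvok_def)
  from movecases[OF r] show ?thesis
  proof (elim disjE exE conjE)
    assume "1 \<le> Poly_Mapping.lookup (rY L r) X" with p show ?thesis by blast
  next
    fix k j P Q assume f: "form N L k j P Q X" and y: "rY L r = mon P + mon Q"
    with st p have "Pi P \<or> Pi Q" unfolding stable_def by blast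
    with y show ?thesis by (auto simp: lookup_add)
  next
    fix W assume "intermediate W" "dissP N L W X" "rY L r = mon W"
    with st p show ?thesis unfolding stable_def by auto
  qed
qed

lemma carry:
  assumes st: "stable Pi" and ok: "mvok g X r" and h: "\<exists>Y. Pi Y \<and> 1 \<le> g Y"
  shows "\<exists>Y. Pi Y \<and> 1 \<le> mv L g X r Y"
proof -
  from h obtain Y where Y: "Pi Y" "1 \<le> g Y" by blast
  show ?thesis
  proof (cases "Y = X")
    case True
    with stable_step[OF st ok] Y obtain T where "Pi T" "1 \<le> Poly_Mapping.lookup (rY L r) T" by blast
    moreover have "Poly_Mapping.lookup (rY L r) T \<le> mv L g X r T"
      using ok by (intro mv_ge_y) (auto simp: mvok_def)
    ultimately show ?thesis by force
  next
    case False
    then have "g Y \<le> mv L g X r Y" by (rule mv_ge)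
    with Y show ?thesis by force
  qed
qed

lemma hasD_step: "mvok g X r \<Longrightarrow> hasD g \<Longrightarrow> hasD (mv L g X r)"
  unfolding hasD_def using carry[OF stable_Dsp] by blast

lemma zdead_step: "mvok g X r \<Longrightarrow> zdead g \<Longrightarrow> zdead (mv L g X r)"
  unfolding zdead_def using carry[OF stable_dead] by blast

lemma lep_mon2: "lep (mon Y1 + mon Y2) g \<longleftrightarrow> (if Y1 = Y2 then 2 \<le> g Y1 else 1 \<le> g Y1 \<and> 1 \<le> g Y2)"
  unfolding lep_def by (auto simp: lookup_add)

lemma z2_step:
  assumes ok: "mvok g X r" and z: "z2 g"
  shows "z2 (mv L g X r)"
proof -
  from z obtain Y1 Y2 where Y: "Dsp Y1" "Dsp Y2" "lep (mon Y1 + mon Y2) g" unfolding z2_def by blast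
  show ?thesis
  proof (cases "Poly_Mapping.lookup (mon Y1 + mon Y2) X + 1 \<le> g X")
    case True
    then show ?thesis using Y lep_persist unfolding z2_def by blast
  next
    case False
    with ok have inX: "X = Y1 \<or> X = Y2" by (auto simp: mvok_def lookup_add split: if_splits)
    show ?thesis
    proof (cases "X = Y1")
      case True
      obtain T where T: "Dsp T" "1 \<le> Poly_Mapping.lookup (rY L r) T"
        using stable_step[OF stable_Dsp ok] Y True by blast
      have "lep (mon T) (Poly_Mapping.lookup (rY L r))" using T by (auto simp: lep_def)
      then have "lep (mon T + mon Y2) (mv L g X r)"
        using lep_replace[of "mon Y1" "mon Y2" g X "mon T"] Y True by simp
      with T Y show ?thesis unfolding z2_def by blast
    next
      case False
      with inX have X2: "X = Y2" by simp
      obtain T where T: "Dsp T" "1 \<le> Poly_Mapping.lookup (rY L r) T"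
        using stable_step[OF stable_Dsp ok] Y X2 by blast
      have "lep (mon T) (Poly_Mapping.lookup (rY L r))" using T by (auto simp: lep_def)
      moreover have "lep (mon Y2 + mon Y1) g" using Y by (simp add: add.commute)
      ultimately have "lep (mon T + mon Y1) (mv L g X r)"
        using lep_replace[of "mon Y2" "mon Y1" g X "mon T"] X2 by simp
      with T Y show ?thesis unfolding z2_def by blast
    qed
  qed
qed

end



context casc
begin

lemma wit_nonD: "wit c \<Longrightarrow> 1 \<le> Poly_Mapping.lookup c Y \<Longrightarrow> layer Y < n"
  using n2 by (auto simp: wit_def upint_def upreact_def lookup_add layer_Sprev split: if_splits)

lemma wit_nonint: "wit c \<Longrightarrow> 1 \<le> Poly_Mapping.lookup c Y \<Longrightarrow> intermediate Y \<Longrightarrow> c = mon Y \<and> upint Y"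
  by (auto simp: wit_def upint_def upreact_def lookup_add split: if_splits)

lemma wit_step:
  assumes wc: "wit c" and cX: "1 \<le> Poly_Mapping.lookup c X" and ok: "mvok g X r"
    and ng: "Poly_Mapping.lookup (rY L r) X = 0"
  shows "(\<exists>c'. wit c' \<and> lep c' (Poly_Mapping.lookup (rY L r))) \<or>
         (\<exists>W. Dsp W \<and> W \<noteq> X \<and> \<not> Dsp X \<and> 1 \<le> Poly_Mapping.lookup (rY L r) W)"
proof -
  from ok have r: "r \<in> Rset N L" "Poly_Mapping.lookup (rY' L r) X \<noteq> Poly_Mapping.lookup (rY L r) X"
    by (auto simp: mvok_def)
  have nD: "\<not> Dsp X" using wit_nonD[OF wc cX] by (simp add: Dsp_def)
  from movecases[OF r] ng show ?thesis
  proof (elim disjE exE conjE)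
    assume "1 \<le> Poly_Mapping.lookup (rY L r) X" with ng show ?thesis by simp
  next
    fix k j P Q assume f: "form N L k j P Q X" and y: "rY L r = mon P + mon Q"
    have "intermediate X" using form_props(1)[OF f] .
    with wit_nonint[OF wc cX] have "upint X" by blast
    with f have "upreact P Q" by (auto simp: form_def upint_def upreact_def)
    then have "wit (rY L r)" using y by (auto simp: wit_def)
    then show ?thesis by (auto simp: lep_def)
  next
    fix W assume i: "intermediate W" and d: "dissP N L W X" and y: "rY L r = mon W"
    show ?thesis
    proof (cases "Dsp W")
      case True
      with nD y show ?thesis by auto
    next
      case False
      then have "upint W" using i by (auto simp: upint_def Dsp_def)
      then have "wit (rY L r)" using y by (auto simp: wit_def)
      then show ?thesis by (auto simp: lep_def)
    qed
  qed
qed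

lemma ok_grow_or0:
  "1 \<le> Poly_Mapping.lookup (rY L r) X \<or> Poly_Mapping.lookup (rY L r) X = 0" by auto

lemma mvok_ge: "mvok g X r \<Longrightarrow> 1 \<le> Poly_Mapping.lookup (rY L r) X \<Longrightarrow> \<forall>Y. g Y \<le> mv L g X r Y"
  by (auto simp: mvok_def intro: mv_grow)

lemma mvok_ge_y: "mvok g X r \<Longrightarrow> Poly_Mapping.lookup (rY L r) Y \<le> mv L g X r Y"
  by (auto simp: mvok_def intro: mv_ge_y)

lemma hasw_step:
  assumes ok: "mvok g X r" and h: "hasw g"
  shows "hasw (mv L g X r) \<or> (\<exists>W. Dsp W \<and> W \<noteq> X \<and> \<not> Dsp X \<and> 1 \<le> Poly_Mapping.lookup (rY L r) W)"
proof -
  from h obtain c where c: "wit c" "lep c g" unfolding hasw_def by blast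
  show ?thesis
  proof (cases "Poly_Mapping.lookup c X + 1 \<le> g X")
    case True
    then show ?thesis using c lep_persist unfolding hasw_def by blast
  next
    case False
    with ok have cX: "1 \<le> Poly_Mapping.lookup c X" by (auto simp: mvok_def)
    show ?thesis
    proof (cases "1 \<le> Poly_Mapping.lookup (rY L r) X")
      case True
      then show ?thesis using c lep_mono mvok_ge[OF ok] unfolding hasw_def by blast
    next
      case False
      then have "Poly_Mapping.lookup (rY L r) X = 0" by simp
      from wit_step[OF c(1) cX ok this] show ?thesis
      proof
        assume "\<exists>c'. wit c' \<and> lep c' (Poly_Mapping.lookup (rY L r))"
        then obtain c' where "wit c'" "lep c' (Poly_Mapping.lookup (rY L r))" by blast
        then have "lep c' (mv L g X r)" using lep_mono mvok_ge_y[OF ok] by blast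
        with \<open>wit c'\<close> show ?thesis unfolding hasw_def by blast
      qed blast
    qed
  qed
qed

lemma z2_from:
  assumes ok: "mvok g X r" and h: "hasD g" and W: "Dsp W" "W \<noteq> X" "\<not> Dsp X"
    "1 \<le> Poly_Mapping.lookup (rY L r) W"
  shows "z2 (mv L g X r)"
proof -
  from h obtain Y where Y: "Dsp Y" "1 \<le> g Y" unfolding hasD_def by blast
  with W have YX: "Y \<noteq> X" by blast
  have gy: "1 \<le> mv L g X r Y" using mv_ge[OF YX, of g L r] Y by simp
  have gw: "g W + Poly_Mapping.lookup (rY L r) W \<le> mv L g X r W" using W by (simp add: mv_def)
  show ?thesis
  proof (cases "Y = W")
    case True
    then have "lep (mon W + mon W) (mv L g X r)" using gw Y W by (simp add: lep_mon2)
    with W show ?thesis unfolding z2_def by blast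
  next
    case False
    then have "lep (mon Y + mon W) (mv L g X r)" using gw gy W by (simp add: lep_mon2)
    with W Y show ?thesis unfolding z2_def by blast
  qed
qed

lemma hasD_from: "mvok g X r \<Longrightarrow> Dsp W \<Longrightarrow> 1 \<le> Poly_Mapping.lookup (rY L r) W \<Longrightarrow> hasD (mv L g X r)"
  unfolding hasD_def using mvok_ge_y order_trans by blast

lemma w2_step:
  assumes ok: "mvok g X r" and hD: "hasD g" and h: "w2 g"
  shows "w2 (mv L g X r) \<or> z2 (mv L g X r)"
proof -
  from h obtain c1 c2 where c: "wit c1" "wit c2" "lep (c1 + c2) g" unfolding w2_def by blast
  show ?thesis
  proof (cases "Poly_Mapping.lookup (c1 + c2) X + 1 \<le> g X")
    case True
    then show ?thesis using c lep_persist unfolding w2_def by blast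
  next
    case False
    with ok have cX: "1 \<le> Poly_Mapping.lookup c1 X \<or> 1 \<le> Poly_Mapping.lookup c2 X"
      by (auto simp: mvok_def lookup_add)
    show ?thesis
    proof (cases "1 \<le> Poly_Mapping.lookup (rY L r) X")
      case True
      then show ?thesis using c lep_mono mvok_ge[OF ok] unfolding w2_def by blast
    next
      case False
      then have y0: "Poly_Mapping.lookup (rY L r) X = 0" by simp
      show ?thesis
      proof (cases "1 \<le> Poly_Mapping.lookup c1 X")
        case True
        from wit_step[OF c(1) True ok y0] show ?thesis
        proof
          assume "\<exists>c'. wit c' \<and> lep c' (Poly_Mapping.lookup (rY L r))"
          then obtain c' where "wit c'" "lep c' (Poly_Mapping.lookup (rY L r))" by blast
          then have "lep (c' + c2) (mv L g X r)" using lep_replace[OF c(3) True] by blast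
          with \<open>wit c'\<close> c show ?thesis unfolding w2_def by blast
        next
          assume "\<exists>W. Dsp W \<and> W \<noteq> X \<and> \<not> Dsp X \<and> 1 \<le> Poly_Mapping.lookup (rY L r) W"
          then show ?thesis using z2_from[OF ok hD] by blast
        qed
      next
        case False
        with cX have c2X: "1 \<le> Poly_Mapping.lookup c2 X" by simp
        have c21: "lep (c2 + c1) g" using c(3) by (simp add: add.commute)
        from wit_step[OF c(2) c2X ok y0] show ?thesis
        proof
          assume "\<exists>c'. wit c' \<and> lep c' (Poly_Mapping.lookup (rY L r))"
          then obtain c' where "wit c'" "lep c' (Poly_Mapping.lookup (rY L r))" by blast
          then have "lep (c' + c1) (mv L g X r)" using lep_replace[OF c21 c2X] by blast
          with \<open>wit c'\<close> c show ?thesis unfolding w2_def by blast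
        next
          assume "\<exists>W. Dsp W \<and> W \<noteq> X \<and> \<not> Dsp X \<and> 1 \<le> Poly_Mapping.lookup (rY L r) W"
          then show ?thesis using z2_from[OF ok hD] by blast
        qed
      qed
    qed
  qed
qed

lemma zw2_step: "mvok g X r \<Longrightarrow> zw2 g \<Longrightarrow> ZZ (mv L g X r)"
  unfolding zw2_def ZZ_def using w2_step hasD_step by blast

end



context casc
begin

lemma Rsp_Dsp: "Rsp Y \<Longrightarrow> Dsp Y"
  by (auto simp: Rsp_def Dsp_def)

lemma zR_step:
  assumes ok: "mvok g X r" and z: "zR g"
  shows "ZZ (mv L g X r)"
proof -
  from z obtain Y0 c where Y0: "Rsp Y0" "1 \<le> g Y0" and c: "wit c" "lep c g"
    unfolding zR_def hasR_def hasw_def by blast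
  have hD: "hasD g" using Y0 Rsp_Dsp unfolding hasD_def by blast
  show ?thesis
  proof (cases "Y0 = X")
    case False
    then have "1 \<le> mv L g X r Y0" using mv_ge[OF False, of g L r] Y0 by simp
    then have hR: "hasR (mv L g X r)" using Y0 unfolding hasR_def by blast
    have "hasw g" using c unfolding hasw_def by blast
    from hasw_step[OF ok this] show ?thesis
    proof
      assume "hasw (mv L g X r)" with hR show ?thesis unfolding ZZ_def zR_def by blast
    next
      assume "\<exists>W. Dsp W \<and> W \<noteq> X \<and> \<not> Dsp X \<and> 1 \<le> Poly_Mapping.lookup (rY L r) W"
      then show ?thesis using z2_from[OF ok hD] unfolding ZZ_def by blast
    qed
  next
    case True
    have cX0: "Poly_Mapping.lookup c X = 0"
    proof (rule ccontr)
      assume "Poly_Mapping.lookup c X \<noteq> 0"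
      then have "layer X < n" using wit_nonD[OF c(1)] by simp
      with True Y0(1) Rsp_Dsp[of X] show False by (simp add: Dsp_def)
    qed
    have gX: "1 \<le> g X" using ok by (simp add: mvok_def)
    have cg': "lep c (mv L g X r)" using lep_persist[OF c(2)] cX0 gX by simp
    then have hw': "hasw (mv L g X r)" using c(1) unfolding hasw_def by blast
    from ok have r: "r \<in> Rset N L" "Poly_Mapping.lookup (rY' L r) X \<noteq> Poly_Mapping.lookup (rY L r) X"
      by (auto simp: mvok_def)
    from movecases[OF r] show ?thesis
    proof (elim disjE exE conjE)
      assume "1 \<le> Poly_Mapping.lookup (rY L r) X"
      then have "g X \<le> mv L g X r X" using mvok_ge[OF ok] by blast
      then have "hasR (mv L g X r)" using Y0 True gX unfolding hasR_def by force
      with hw' show ?thesis unfolding ZZ_def zR_def by blast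
    next
      fix k j P Q assume f: "form N L k j P Q X" and y: "rY L r = mon P + mon Q"
      have "intermediate X" using form_props(1)[OF f] .
      with Y0(1) True obtain j0 where X: "X = U n j0" by (auto simp: Rsp_def)
      with f have PQ: "P = A" "Q = S n (j0 - 1)" using A_Sprev by (auto simp: form_def)
      have "1 \<le> Poly_Mapping.lookup (rY L r) Q" using y by (simp add: lookup_add)
      moreover have "Dsp Q" using PQ by (simp add: Dsp_def)
      ultimately have hD': "hasD (mv L g X r)" using hasD_from[OF ok] by blast
      have l1: "lep (mon X + c) g"
        using c(2) cX0 gX unfolding lep_def by (auto simp: lookup_add)
      have l2: "lep (mon A) (Poly_Mapping.lookup (rY L r))" using y PQ by (auto simp: lep_def lookup_add)
      have "lep (mon A + c) (mv L g X r)" using lep_replace[OF l1 _ l2] by simp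
      moreover have "wit (mon A)" by (simp add: wit_def)
      ultimately have "w2 (mv L g X r)" using c(1) unfolding w2_def by blast
      with hD' show ?thesis unfolding ZZ_def zw2_def by blast
    next
      fix W assume i: "intermediate W" and d: "dissP N L W X" and y: "rY L r = mon W"
      have nX: "\<not> intermediate X" using dissP_props(2)[OF d] .
      with Y0(1) True obtain j0 where X: "X = S n j0" by (auto simp: Rsp_def)
      from d obtain k j where kj: "1 \<le> k" "k \<le> N" "1 \<le> j" "j \<le> L k"
        "(W = U k j \<and> (X = Sprev L k \<or> X = S k (j - 1) \<or> X = S k j)) \<or>
         (W = V k j \<and> (X = F k \<or> X = S k j \<or> X = S k (j - 1)))"
        unfolding dissP_def by blast
      have RD: "Rsp W \<or> dead W"
        using kj X by (auto simp: Rsp_def dead_def Sprev_def split: if_splits)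
      have gW: "1 \<le> mv L g X r W" using mvok_ge_y[OF ok, of W] y by simp
      from RD show ?thesis
      proof
        assume "Rsp W"
        then have "hasR (mv L g X r)" using gW unfolding hasR_def by blast
        with hw' show ?thesis unfolding ZZ_def zR_def by blast
      next
        assume "dead W"
        then show ?thesis using gW unfolding ZZ_def zdead_def by blast
      qed
    qed
  qed
qed

lemma ZZ_step: "mvok g X r \<Longrightarrow> ZZ g \<Longrightarrow> ZZ (mv L g X r)"
  unfolding ZZ_def using z2_step zdead_step zR_step zw2_step unfolding ZZ_def by blast

lemma closed_ZZ: "closedP N L ZZ"
  unfolding closedP_def using ZZ_step by (auto simp: mvok_def)

definition Pwd where "Pwd g \<longleftrightarrow> hasD g \<or> hasw g"

lemma closed_Pwd: "closedP N L Pwd"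
  unfolding closedP_def
proof (intro allI impI)
  fix g X r assume h: "Pwd g" "1 \<le> g X" "r \<in> Rset N L" "Poly_Mapping.lookup (rY' L r) X \<noteq> Poly_Mapping.lookup (rY L r) X"
  then have ok: "mvok g X r" by (simp add: mvok_def)
  from h(1) show "Pwd (mv L g X r)" unfolding Pwd_def
  proof
    assume "hasD g" then show "hasD (mv L g X r) \<or> hasw (mv L g X r)" using hasD_step[OF ok] by blast
  next
    assume "hasw g"
    from hasw_step[OF ok this] show "hasD (mv L g X r) \<or> hasw (mv L g X r)"
      using hasD_from[OF ok] by blast
  qed
qed

definition NA where "NA g \<longleftrightarrow> g \<noteq> Poly_Mapping.lookup (mon A)"

lemma closed_NA: "closedP N L NA"
  unfolding closedP_def
proof (intro allI impI)
  fix g X r assume h: "NA g" "1 \<le> g X" "r \<in> Rset N L" "Poly_Mapping.lookup (rY' L r) X \<noteq> Poly_Mapping.lookup (rY L r) X"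
  then have ok: "mvok g X r" by (simp add: mvok_def)
  show "NA (mv L g X r)"
  proof (rule ccontr)
    assume "\<not> NA (mv L g X r)"
    then have e: "\<And>Y. mv L g X r Y = (if Y = A then 1 else 0)" by (simp add: NA_def)
    have yle: "Poly_Mapping.lookup (rY L r) Y \<le> (if Y = A then 1 else 0)" for Y
      using mvok_ge_y[OF ok, of Y] e[of Y] by simp
    from movecases[OF h(3,4)] show False
    proof (elim disjE exE conjE)
      assume gr: "1 \<le> Poly_Mapping.lookup (rY L r) X"
      have ge: "g Y \<le> (if Y = A then 1 else 0)" for Y
      proof -
        have "g Y \<le> mv L g X r Y" using mvok_ge[OF ok gr] by blast
        then show ?thesis using e[of Y] by simp
      qed
      have XA: "X = A" using ge[of X] h(2) by (cases "X = A") auto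
      have "g = Poly_Mapping.lookup (mon A)"
      proof (rule ext)
        fix Y show "g Y = Poly_Mapping.lookup (mon A) Y"
          using ge[of Y] h(2) XA by (cases "Y = A") auto
      qed
      with h(1) show False by (simp add: NA_def)
    next
      fix k j P Q assume y: "rY L r = mon P + mon Q"
      have PA: "P = A" using yle[of P] y by (cases "P = A") (auto simp: lookup_add)
      have QA: "Q = A" using yle[of Q] y by (cases "Q = A") (auto simp: lookup_add)
      show False using yle[of A] y PA QA by (simp add: lookup_add)
    next
      fix W assume "intermediate W" "rY L r = mon W"
      then show False using yle[of W] by (cases "W = A") auto
    qed
  qed
qed

end



lemma mon_inj: "mon X = mon Y \<longleftrightarrow> X = Y"
proof
  assume "mon X = mon Y"
  then have "Poly_Mapping.lookup (mon X) X = Poly_Mapping.lookup (mon Y) X" by simp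
  then show "X = Y" by (simp split: if_splits)
qed simp

lemma poly_sum_keys: "p = (\<Sum>m\<in>Poly_Mapping.keys p. Poly_Mapping.single m (Poly_Mapping.lookup p m))"
proof (rule poly_mapping_eqI)
  fix k
  show "Poly_Mapping.lookup p k = Poly_Mapping.lookup (\<Sum>m\<in>Poly_Mapping.keys p. Poly_Mapping.single m (Poly_Mapping.lookup p m)) k"
    by (simp add: lookup_sum lookup_single when_def in_keys_iff)
qed

lemma single_scal: "Poly_Mapping.single m c = Poly_Mapping.single 0 c * Poly_Mapping.single m (1::rpoly)"
  by (simp add: mult_single)

lemma keys_remove: "Poly_Mapping.keys (p - Poly_Mapping.single m (Poly_Mapping.lookup p m)) \<subseteq> Poly_Mapping.keys p - {m}"
  by (auto simp: in_keys_iff lookup_minus lookup_single when_def split: if_splits)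

lemma Sprev_ne [simp]: "Sprev L m \<noteq> U a b" "Sprev L m \<noteq> V a b" "Sprev L m \<noteq> F a"
  by (auto simp: Sprev_def)

lemma lookup_rY_U: "Poly_Mapping.lookup (rY L r) (U a b) = (if r = Rb a b \<or> r = Rc a b then 1 else 0)"
  by (cases r) (auto simp: cpx1_def cpx2_def lookup_add lookup_single when_def)

lemma lookup_rY'_U: "Poly_Mapping.lookup (rY' L r) (U a b) = (if r = Ra a b then 1 else 0)"
  by (cases r) (auto simp: cpx1_def cpx2_def lookup_add lookup_single when_def)

context casc
begin

lemma in_species [simp]:
  "xx \<in> species_set N L" "ww \<in> species_set N L" "uu \<in> species_set N L" "A \<in> species_set N L"
  using n2 nN Lpos[of n] by (auto simp: species_set_def)

lemma Lnpos: "1 \<le> L n" using Lpos[of n] n2 nN by simp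

lemma rhs_uu: "rhs N L uu = Poly_Mapping.single (mon A + mon ww) (rconst (Ra n (L n)))
   + Poly_Mapping.single (mon uu) (- rconst (Rb n (L n))) + Poly_Mapping.single (mon uu) (- rconst (Rc n (L n)))"
proof -
  let ?f = "\<lambda>r. Poly_Mapping.single (rY L r)
   (rconst r * of_int (int (Poly_Mapping.lookup (rY' L r) uu) - int (Poly_Mapping.lookup (rY L r) uu)))"
  have sub: "{Ra n (L n), Rb n (L n), Rc n (L n)} \<subseteq> Rset N L"
    using n2 nN Lnpos by (auto simp: Rset_iff)
  have z: "?f r = 0" if "r \<in> Rset N L - {Ra n (L n), Rb n (L n), Rc n (L n)}" for r
    using that by (simp add: lookup_rY_U lookup_rY'_U)
  have "rhs N L uu = sum ?f {Ra n (L n), Rb n (L n), Rc n (L n)}"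
    unfolding rhs_eq using sum.mono_neutral_right[OF finite_Rset sub, of ?f] z by auto
  also have "\<dots> = ?f (Ra n (L n)) + ?f (Rb n (L n)) + ?f (Rc n (L n))" by simp
  also have "\<dots> = Poly_Mapping.single (mon A + mon ww) (rconst (Ra n (L n)))
   + Poly_Mapping.single (mon uu) (- rconst (Rb n (L n))) + Poly_Mapping.single (mon uu) (- rconst (Rc n (L n)))"
    using A_Sprev by (simp add: cpx1_mon cpx2_mon lookup_add add.commute)
  finally show ?thesis .
qed

lemma rY_eq_monU: "rY L r = mon (U a b) \<Longrightarrow> r = Rb a b \<or> r = Rc a b"
proof -
  assume "rY L r = mon (U a b)"
  then have "Poly_Mapping.lookup (rY L r) (U a b) = 1" by simp
  then show ?thesis by (simp add: lookup_rY_U split: if_splits)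
qed

lemma Sprev_eq_S: "Sprev L k = S a b \<longleftrightarrow> k \<noteq> 1 \<and> a = k - 1 \<and> b = L (k - 1)"
  by (auto simp: Sprev_def)

lemma Sprev_eq_S': "S a b = Sprev L k \<longleftrightarrow> k \<noteq> 1 \<and> a = k - 1 \<and> b = L (k - 1)"
  by (auto simp: Sprev_def)

lemma lookup_rhs_xx: "Poly_Mapping.lookup (rhs N L xx) (mon uu) = rconst (Rc n (L n))"
proof -
  let ?f = "\<lambda>r. (rconst r * of_int (int (Poly_Mapping.lookup (rY' L r) xx) - int (Poly_Mapping.lookup (rY L r) xx))
     when rY L r = mon uu)"
  have "Poly_Mapping.lookup (rhs N L xx) (mon uu) = sum ?f (Rset N L)"
    unfolding rhs_eq lookup_sum lookup_single by (rule refl)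
  also have "\<dots> = ?f (Rc n (L n))"
  proof (rule sum_single_nonzero[OF finite_Rset])
    show "Rc n (L n) \<in> Rset N L" using n2 nN Lnpos by (auto simp: Rset_iff)
  next
    fix r assume "r \<in> Rset N L" "r \<noteq> Rc n (L n)"
    show "?f r = 0"
    proof (cases "rY L r = mon uu")
      case True
      with rY_eq_monU[of r n "L n"] \<open>r \<noteq> Rc n (L n)\<close> have "r = Rb n (L n)" by blast
      have a: "A \<noteq> xx" using n2 by simp
      have b: "ww \<noteq> xx" using Lnpos by simp
      have l1: "Poly_Mapping.lookup (rY' L (Rb n (L n))) xx = 0"
        using a b by (simp add: A_Sprev cpx2_def lookup_add lookup_single)
      have l2: "Poly_Mapping.lookup (rY L (Rb n (L n))) xx = 0"
        by (simp add: cpx1_def lookup_single)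
      show ?thesis unfolding \<open>r = Rb n (L n)\<close> l1 l2 by simp
    next
      case False
      then show ?thesis by simp
    qed
  qed
  also have "\<dots> = rconst (Rc n (L n))"
  proof -
    have a: "A \<noteq> xx" using n2 by simp
    have l1: "Poly_Mapping.lookup (rY' L (Rc n (L n))) xx = 1"
      using a by (simp add: A_Sprev cpx2_def lookup_add lookup_single)
    have l2: "Poly_Mapping.lookup (rY L (Rc n (L n))) xx = 0"
      by (simp add: cpx1_def lookup_single)
    have l3: "rY L (Rc n (L n)) = mon uu" by (simp add: cpx1_mon)
    show ?thesis by (simp only: l1 l2 l3 when_simps(1) simp_thms(6)) simp
  qed
  finally show ?thesis .
qed

lemma keys_rhs_xx: "m \<in> Poly_Mapping.keys (rhs N L xx) \<Longrightarrow> m = mon uu \<or> ZZ (Poly_Mapping.lookup m)"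
proof -
  assume "m \<in> Poly_Mapping.keys (rhs N L xx)"
  then obtain r where r: "m = rY L r" "r \<in> Rset N L" "Poly_Mapping.lookup (rY' L r) xx \<noteq> Poly_Mapping.lookup (rY L r) xx"
    using keys_rhs by blast
  have "m = mon uu \<or> (\<exists>Y. dead Y \<and> 1 \<le> Poly_Mapping.lookup m Y)"
  proof (cases r)
    case (Ra k j)
    with r have kj: "1 \<le> k" "k \<le> N" "1 \<le> j" "j \<le> L k" by (auto simp: Rset_iff)
    from r Ra have "xx = Sprev L k \<or> xx = S k (j - 1)" by (auto split: if_splits)
    then have "k = n + 1" using kj by (auto simp: Sprev_eq_S Sprev_eq_S')
    then have "dead (S k (j - 1))" by (simp add: dead_def)
    moreover have "1 \<le> Poly_Mapping.lookup m (S k (j - 1))" using r Ra by simp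
    ultimately show ?thesis by blast
  next
    case (Rb k j)
    with r have kj: "1 \<le> k" "k \<le> N" "1 \<le> j" "j \<le> L k" by (auto simp: Rset_iff)
    from r Rb have "xx = Sprev L k \<or> xx = S k (j - 1)" by (auto split: if_splits)
    then have "k = n + 1" using kj by (auto simp: Sprev_eq_S Sprev_eq_S')
    then have "dead (U k j)" by (simp add: dead_def)
    moreover have "1 \<le> Poly_Mapping.lookup m (U k j)" using r Rb by simp
    ultimately show ?thesis by blast
  next
    case (Rc k j)
    with r have kj: "1 \<le> k" "k \<le> N" "1 \<le> j" "j \<le> L k" by (auto simp: Rset_iff)
    from r Rc have "xx = Sprev L k \<or> xx = S k j" by (auto split: if_splits)
    then show ?thesis
    proof
      assume "xx = Sprev L k"
      then have "k = n + 1" using kj by (auto simp: Sprev_eq_S Sprev_eq_S')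
      then have "dead (U k j)" by (simp add: dead_def)
      moreover have "1 \<le> Poly_Mapping.lookup m (U k j)" using r Rc by simp
      ultimately show ?thesis by blast
    next
      assume "xx = S k j"
      then have "k = n" "j = L n" by auto
      then show ?thesis using r Rc by (simp add: cpx1_mon)
    qed
  next
    case (Rat k j)
    from r Rat have "xx = S k j" by (auto split: if_splits)
    then have kn: "k = n" by simp
    have "dead (F k)" unfolding kn by (simp add: dead_def)
    moreover have "1 \<le> Poly_Mapping.lookup m (F k)" using r Rat by simp
    ultimately show ?thesis by blast
  next
    case (Rbt k j)
    from r Rbt have "xx = S k j" by (auto split: if_splits)
    then have kn: "k = n" by simp
    have "dead (V k j)" unfolding kn by (simp add: dead_def)
    moreover have "1 \<le> Poly_Mapping.lookup m (V k j)" using r Rbt by simp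
    ultimately show ?thesis by blast
  next
    case (Rct k j)
    from r Rct have "xx = S k (j - 1)" by (auto split: if_splits)
    then have kn: "k = n" by simp
    have "dead (V k j)" unfolding kn by (simp add: dead_def)
    moreover have "1 \<le> Poly_Mapping.lookup m (V k j)" using r Rct by simp
    ultimately show ?thesis by blast
  qed
  then show ?thesis unfolding ZZ_def zdead_def by blast
qed

end



context casc
begin

lemma z2_add:
  assumes "Dsp W" "1 \<le> y W" "hasD h"
  shows "z2 (\<lambda>Y. y Y + h Y)"
proof -
  from assms(3) obtain Y0 where Y0: "Dsp Y0" "1 \<le> h Y0" unfolding hasD_def by blast
  show ?thesis
  proof (cases "Y0 = W")
    case True
    then have "lep (mon W + mon W) (\<lambda>Y. y Y + h Y)" using assms Y0 by (simp add: lep_mon2)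
    with assms show ?thesis unfolding z2_def by blast
  next
    case False
    then have "lep (mon Y0 + mon W) (\<lambda>Y. y Y + h Y)" using assms Y0 by (simp add: lep_mon2)
    with assms Y0 show ?thesis unfolding z2_def by blast
  qed
qed

lemma lep_addr: "lep c h \<Longrightarrow> lep c (\<lambda>Y. y Y + h Y)"
  unfolding lep_def by (simp add: add_increasing)

lemma s_dead: "dead W \<Longrightarrow> 1 \<le> y W \<Longrightarrow> ZZ (\<lambda>Y. y Y + h Y)"
  unfolding ZZ_def zdead_def by (metis le_add1 order.trans)

lemma s_R: "Rsp W \<Longrightarrow> 1 \<le> y W \<Longrightarrow> Pwd h \<Longrightarrow> ZZ (\<lambda>Y. y Y + h Y)"
proof -
  assume a: "Rsp W" "1 \<le> y W" "Pwd h"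
  from a(3) show ?thesis unfolding Pwd_def
  proof
    assume "hasD h" then show ?thesis using z2_add[of W y h, OF Rsp_Dsp[OF a(1)] a(2)] unfolding ZZ_def by blast
  next
    assume "hasw h"
    then have "hasw (\<lambda>Y. y Y + h Y)" unfolding hasw_def using lep_addr by blast
    moreover have "hasR (\<lambda>Y. y Y + h Y)" unfolding hasR_def using a by (metis le_add1 order.trans)
    ultimately show ?thesis unfolding ZZ_def zR_def by blast
  qed
qed

lemma s_A: "y = Poly_Mapping.lookup (mon A + mon ww) \<Longrightarrow> Pwd h \<Longrightarrow> ZZ (\<lambda>Y. y Y + h Y)"
proof -
  assume a: "y = Poly_Mapping.lookup (mon A + mon ww)" "Pwd h"
  have Dw: "Dsp ww" by (simp add: Dsp_def)
  have yw: "1 \<le> y ww" using a(1) by (simp add: lookup_add)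
  from a(2) show ?thesis unfolding Pwd_def
  proof
    assume "hasD h" then show ?thesis using z2_add[of ww y h, OF Dw yw] unfolding ZZ_def by blast
  next
    assume "hasw h"
    then obtain c where c: "wit c" "lep c h" unfolding hasw_def by blast
    have "lep (mon A + c) (\<lambda>Y. y Y + h Y)"
      using c(2) a(1) unfolding lep_def by (auto simp: lookup_add add_mono)
    moreover have "wit (mon A)" by (simp add: wit_def)
    ultimately have "w2 (\<lambda>Y. y Y + h Y)" using c(1) unfolding w2_def by blast
    moreover have "hasD (\<lambda>Y. y Y + h Y)" unfolding hasD_def using Dw yw by (metis le_add1 order.trans)
    ultimately show ?thesis unfolding ZZ_def zw2_def by blast
  qed
qed

lemma W_move:
  assumes r: "r \<in> Rset N L" and d: "Poly_Mapping.lookup (rY' L r) ww \<noteq> Poly_Mapping.lookup (rY L r) ww"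
    and h: "Pwd h"
  shows "ZZ (\<lambda>Y. Poly_Mapping.lookup (rY L r) Y + h Y)"
proof (cases r)
  case (Ra k j)
  with r have kj: "1 \<le> k" "k \<le> N" "1 \<le> j" "j \<le> L k" by (auto simp: Rset_iff)
  from d Ra have "ww = Sprev L k \<or> ww = S k (j - 1)" by (auto split: if_splits)
  then have "k = n" "j = L n" using kj Lnpos by (auto simp: Sprev_eq_S Sprev_eq_S')
  then have "rY L r = mon A + mon ww" using Ra A_Sprev by (simp add: cpx2_mon)
  then show ?thesis using s_A h by simp
next
  case (Rb k j)
  with r have kj: "1 \<le> k" "k \<le> N" "1 \<le> j" "j \<le> L k" by (auto simp: Rset_iff)
  from d Rb have "ww = Sprev L k \<or> ww = S k (j - 1)" by (auto split: if_splits)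
  then have kn: "k = n" using kj Lnpos by (auto simp: Sprev_eq_S Sprev_eq_S')
  have "Rsp (U k j)" unfolding kn by (simp add: Rsp_def)
  then show ?thesis using s_R h Rb by (simp add: cpx1_mon)
next
  case (Rc k j)
  with r have kj: "1 \<le> k" "k \<le> N" "1 \<le> j" "j \<le> L k" by (auto simp: Rset_iff)
  from d Rc have "ww = Sprev L k \<or> ww = S k j" by (auto split: if_splits)
  then have kn: "k = n" using kj Lnpos by (auto simp: Sprev_eq_S Sprev_eq_S')
  have "Rsp (U k j)" unfolding kn by (simp add: Rsp_def)
  then show ?thesis using s_R h Rc by (simp add: cpx1_mon)
next
  case (Rat k j)
  from d Rat have "ww = S k j" by (auto split: if_splits)
  then have kn: "k = n" by simp
  have "dead (F k)" unfolding kn by (simp add: dead_def)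
  then show ?thesis using s_dead Rat by (simp add: cpx2_mon lookup_add)
next
  case (Rbt k j)
  from d Rbt have "ww = S k j" by (auto split: if_splits)
  then have kn: "k = n" by simp
  have "dead (V k j)" unfolding kn by (simp add: dead_def)
  then show ?thesis using s_dead Rbt by (simp add: cpx1_mon)
next
  case (Rct k j)
  from d Rct have "ww = S k (j - 1)" by (auto split: if_splits)
  then have kn: "k = n" by simp
  have "dead (V k j)" unfolding kn by (simp add: dead_def)
  then show ?thesis using s_dead Rct by (simp add: cpx1_mon)
qed

lemma keys_rhs_ww_mult:
  assumes "\<forall>m\<in>Poly_Mapping.keys p. Pwd (Poly_Mapping.lookup m)"
  shows "\<forall>m\<in>Poly_Mapping.keys (rhs N L ww * p). ZZ (Poly_Mapping.lookup m)"
proof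
  fix m assume "m \<in> Poly_Mapping.keys (rhs N L ww * p)"
  then have "m \<in> {a + b | a b. a \<in> Poly_Mapping.keys (rhs N L ww) \<and> b \<in> Poly_Mapping.keys p}"
    by (rule subsetD[OF keys_mult])
  then obtain a b where ab: "m = a + b" "a \<in> Poly_Mapping.keys (rhs N L ww)" "b \<in> Poly_Mapping.keys p" by blast
  from ab(2) obtain r where r: "a = rY L r" "r \<in> Rset N L" "Poly_Mapping.lookup (rY' L r) ww \<noteq> Poly_Mapping.lookup (rY L r) ww"
    using keys_rhs[of N L ww] by blast
  have "Poly_Mapping.lookup m = (\<lambda>Y. Poly_Mapping.lookup (rY L r) Y + Poly_Mapping.lookup b Y)"
    using ab r by (simp add: fun_eq_iff lookup_add)
  then show "ZZ (Poly_Mapping.lookup m)" using W_move[OF r(2,3)] assms ab(3) by simp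
qed

lemma SH:
  assumes nz: "\<not> ZZ (Poly_Mapping.lookup (mon ww + M0))"
  shows "\<forall>p::cpoly. (\<forall>m\<in>Poly_Mapping.keys p. Pwd (Poly_Mapping.lookup m)) \<longrightarrow>
     Poly_Mapping.lookup ((tder N L ^^ k) (Poly_Mapping.single (mon ww) 1 * p)) (mon ww + M0) =
     Poly_Mapping.lookup ((tder N L ^^ k) p) M0"
proof (induction k)
  case 0
  show ?case by (simp add: lookup_single_mult)
next
  case (Suc k)
  show ?case
  proof (intro allI impI)
    fix p :: cpoly assume pw: "\<forall>m\<in>Poly_Mapping.keys p. Pwd (Poly_Mapping.lookup m)"
    have "(tder N L ^^ Suc k) (Poly_Mapping.single (mon ww) 1 * p)
       = (tder N L ^^ k) (rhs N L ww * p) + (tder N L ^^ k) (Poly_Mapping.single (mon ww) 1 * tder N L p)"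
    proof -
      have "(tder N L ^^ Suc k) (Poly_Mapping.single (mon ww) 1 * p) = (tder N L ^^ k) (tder N L (Poly_Mapping.single (mon ww) 1 * p))"
        by (simp only: funpow_Suc_right comp_def)
      also have "tder N L (Poly_Mapping.single (mon ww) 1 * p) = rhs N L ww * p + Poly_Mapping.single (mon ww) 1 * tder N L p"
        by (rule T_mon_mult[OF in_species(2)])
      finally show ?thesis by (simp only: Tpow_add)
    qed
    moreover have "Poly_Mapping.lookup ((tder N L ^^ k) (rhs N L ww * p)) (mon ww + M0) = 0"
      by (rule lookup_Tpow_closed[OF closed_ZZ keys_rhs_ww_mult[OF pw] nz])
    moreover have "\<forall>m\<in>Poly_Mapping.keys (tder N L p). Pwd (Poly_Mapping.lookup m)"
      by (rule keys_T_closed[OF closed_Pwd pw])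
    ultimately show "Poly_Mapping.lookup ((tder N L ^^ Suc k) (Poly_Mapping.single (mon ww) 1 * p)) (mon ww + M0) =
         Poly_Mapping.lookup ((tder N L ^^ Suc k) p) M0"
      using Suc.IH by (simp add: lookup_add funpow_Suc_right del: funpow.simps)
  qed
qed

lemma NA_rY: "NA (Poly_Mapping.lookup (rY L r))"
proof -
  have a: "Poly_Mapping.lookup (mon P + mon Q) \<noteq> Poly_Mapping.lookup (mon A)" for P Q
  proof (cases "P = A")
    case False
    have "Poly_Mapping.lookup (mon P + mon Q) P \<noteq> Poly_Mapping.lookup (mon A) P"
      using False by (simp add: lookup_add)
    then show ?thesis by metis
  next
    case True
    show ?thesis
    proof (cases "Q = A")
      case True
      have "Poly_Mapping.lookup (mon P + mon Q) A \<noteq> Poly_Mapping.lookup (mon A) A"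
        using True \<open>P = A\<close> by (simp add: lookup_add)
      then show ?thesis by metis
    next
      case False
      have "Poly_Mapping.lookup (mon P + mon Q) Q \<noteq> Poly_Mapping.lookup (mon A) Q"
        using False by (simp add: lookup_add)
      then show ?thesis by metis
    qed
  qed
  have b: "Poly_Mapping.lookup (mon W) \<noteq> Poly_Mapping.lookup (mon A)" if "intermediate W" for W
  proof -
    have "W \<noteq> A" using that by auto
    then have "Poly_Mapping.lookup (mon W) W \<noteq> Poly_Mapping.lookup (mon A) W" by simp
    then show ?thesis by metis
  qed
  show ?thesis
  proof (cases r)
    case (Ra m j)
    then have "rY L r = mon (Sprev L m) + mon (S m (j - 1))" by (simp add: cpx2_mon)
    then show ?thesis unfolding NA_def using a by metis
  next
    case (Rb m j) then show ?thesis using b[of "U m j"] by (simp only: NA_def rY.simps cpx1_mon intermediate.simps simp_thms)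
  next
    case (Rc m j) then show ?thesis using b[of "U m j"] by (simp only: NA_def rY.simps cpx1_mon intermediate.simps simp_thms)
  next
    case (Rat m j)
    then have "rY L r = mon (F m) + mon (S m j)" by (simp add: cpx2_mon)
    then show ?thesis unfolding NA_def using a by metis
  next
    case (Rbt m j) then show ?thesis using b[of "V m j"] by (simp only: NA_def rY.simps cpx1_mon intermediate.simps simp_thms)
  next
    case (Rct m j) then show ?thesis using b[of "V m j"] by (simp only: NA_def rY.simps cpx1_mon intermediate.simps simp_thms)
  qed
qed

lemma keys_T_A: "\<forall>m\<in>Poly_Mapping.keys (tder N L (cvar A)). NA (Poly_Mapping.lookup m)"
proof
  fix m assume "m \<in> Poly_Mapping.keys (tder N L (cvar A))"
  then have "m \<in> {m - mon X + rY L r | m X r. m \<in> Poly_Mapping.keys (cvar A) \<and> 1 \<le> Poly_Mapping.lookup m X \<and> r \<in> Rset N L \<and> Poly_Mapping.lookup (rY' L r) X \<noteq> Poly_Mapping.lookup (rY L r) X}"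
    by (rule subsetD[OF keys_T])
  then obtain m0 X r where mr: "m = m0 - mon X + rY L r" "m0 \<in> Poly_Mapping.keys (cvar A)" "1 \<le> Poly_Mapping.lookup m0 X"
    by blast
  have "Poly_Mapping.keys (cvar A) = {mon A}" by (simp add: cvar_mon)
  with mr have m0: "m0 = mon A" by blast
  with mr have "X = A" by (simp split: if_splits)
  with mr m0 have "m = rY L r" by simp
  then show "NA (Poly_Mapping.lookup m)" using NA_rY by simp
qed

lemma not_monA:
  assumes "1 \<le> l" "Poly_Mapping.lookup ((tder N L ^^ l) (cvar A)) M0 \<noteq> 0"
  shows "M0 \<noteq> mon A"
proof -
  obtain l' where l: "l = Suc l'" using assms(1) by (cases l) auto
  have "\<forall>m\<in>Poly_Mapping.keys ((tder N L ^^ l') (tder N L (cvar A))). NA (Poly_Mapping.lookup m)"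
    by (rule keys_Tpow_closed[OF closed_NA keys_T_A])
  moreover have "M0 \<in> Poly_Mapping.keys ((tder N L ^^ l') (tder N L (cvar A)))"
    using assms(2) l by (simp add: in_keys_iff funpow_Suc_right del: funpow.simps)
  ultimately show ?thesis unfolding NA_def by auto
qed

end



context casc
begin

lemma main_locale:
  fixes M0 :: complex and CM :: rpoly and l0 :: nat
  assumes nz: "\<not> ZZ (Poly_Mapping.lookup (mon ww + M0))"
    and l0: "1 \<le> l0"
    and app: "Poly_Mapping.lookup ((tder N L ^^ l0) (cvar A)) M0 \<noteq> 0"
    and nb: "\<forall>l. 1 \<le> l \<and> l < l0 \<longrightarrow> Poly_Mapping.lookup ((tder N L ^^ l) (cvar A)) M0 = 0"
    and cm: "CM = Poly_Mapping.lookup ((tder N L ^^ l0) (cvar A)) M0"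
  shows "Poly_Mapping.lookup ((tder N L ^^ (l0 + 2)) (cvar xx)) (mon ww + M0) = rconst (Rc n (L n)) * rconst (Ra n (L n)) * CM"
    and "\<forall>l. 1 \<le> l \<and> l < l0 + 2 \<longrightarrow> Poly_Mapping.lookup ((tder N L ^^ l) (cvar xx)) (mon ww + M0) = 0"
proof -
  define \<phi> where "\<phi> k p = Poly_Mapping.lookup ((tder N L ^^ k) p) (mon ww + M0)" for k p
  define C where "C k = Poly_Mapping.lookup ((tder N L ^^ k) (cvar A)) M0" for k
  define ra where "ra = rconst (Ra n (L n))"
  define rb where "rb = rconst (Rb n (L n))"
  define rc where "rc = rconst (Rc n (L n))"
  have nA: "M0 \<noteq> mon A" using not_monA[OF l0 app] .
  have C0: "C 0 = 0" using nA by (simp add: C_def cvar_mon lookup_single when_def)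
  have Cl: "1 \<le> k \<Longrightarrow> k < l0 \<Longrightarrow> C k = 0" for k using nb by (simp add: C_def)
  have Cl0: "C l0 = CM" using cm by (simp add: C_def)
  have pA: "\<forall>m\<in>Poly_Mapping.keys (cvar A). Pwd (Poly_Mapping.lookup m)"
  proof -
    have "wit (mon A)" by (simp add: wit_def)
    moreover have "lep (mon A) (Poly_Mapping.lookup (mon A))" by (simp add: lep_def)
    ultimately show ?thesis by (auto simp: cvar_mon Pwd_def hasw_def)
  qed
  have F1: "\<phi> k (Poly_Mapping.single (mon A + mon ww) 1) = C k" for k
  proof -
    have "Poly_Mapping.single (mon A + mon ww) (1::rpoly) = Poly_Mapping.single (mon ww) 1 * cvar A"
      by (simp add: cvar_mon mult_single add.commute)
    then show ?thesis using SH[OF nz, of k] pA by (simp add: \<phi>_def C_def)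
  qed
  have Tk: "(tder N L ^^ Suc k) p = (tder N L ^^ k) (tder N L p)" for k p
    by (simp only: funpow_Suc_right comp_def)
  have F2: "\<phi> (Suc k) (cvar uu) = ra * C k + (- rb) * \<phi> k (cvar uu) + (- rc) * \<phi> k (cvar uu)" for k
  proof -
    have "tder N L (cvar uu) = Poly_Mapping.single 0 ra * Poly_Mapping.single (mon A + mon ww) 1
        + Poly_Mapping.single 0 (- rb) * cvar uu + Poly_Mapping.single 0 (- rc) * cvar uu"
      unfolding T_cvar[OF in_species(3)] rhs_uu ra_def rb_def rc_def
      by (simp add: mult_single cvar_mon)
    then have "\<phi> (Suc k) (cvar uu) = ra * \<phi> k (Poly_Mapping.single (mon A + mon ww) 1) + (- rb) * \<phi> k (cvar uu) + (- rc) * \<phi> k (cvar uu)"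
      unfolding \<phi>_def Tk by (simp only: Tpow_add Tpow_scal lookup_add lookup_scal)
    then show ?thesis by (simp only: F1)
  qed
  have F3: "\<phi> (Suc k) (cvar xx) = rc * \<phi> k (cvar uu)" for k
  proof -
    define R where "R = rhs N L xx - Poly_Mapping.single (mon uu) (Poly_Mapping.lookup (rhs N L xx) (mon uu))"
    have s1: "Poly_Mapping.single 0 rc * cvar uu = Poly_Mapping.single (mon uu) (Poly_Mapping.lookup (rhs N L xx) (mon uu))"
      unfolding lookup_rhs_xx rc_def cvar_mon mult_single by simp
    have e: "tder N L (cvar xx) = R + Poly_Mapping.single 0 rc * cvar uu"
      unfolding T_cvar[OF in_species(1)] R_def s1 by (simp only: diff_add_cancel)
    have "\<forall>m\<in>Poly_Mapping.keys R. ZZ (Poly_Mapping.lookup m)"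
    proof
      fix m assume "m \<in> Poly_Mapping.keys R"
      then have "m \<in> Poly_Mapping.keys (rhs N L xx) - {mon uu}" unfolding R_def by (rule subsetD[OF keys_remove])
      then have a: "m \<in> Poly_Mapping.keys (rhs N L xx)" and b: "m \<noteq> mon uu" by simp_all
      from keys_rhs_xx[OF a] b show "ZZ (Poly_Mapping.lookup m)" by simp
    qed
    then have "\<phi> k R = 0" unfolding \<phi>_def by (rule lookup_Tpow_closed[OF closed_ZZ _ nz])
    moreover have "\<phi> (Suc k) (cvar xx) = \<phi> k R + rc * \<phi> k (cvar uu)"
      unfolding \<phi>_def Tk e by (simp only: Tpow_add Tpow_scal lookup_add lookup_scal)
    ultimately show ?thesis by simp
  qed
  have neq: "mon Z \<noteq> mon ww + M0" if "Z \<noteq> ww" for Z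
  proof
    assume "mon Z = mon ww + M0"
    then have "Poly_Mapping.lookup (mon Z) ww = Poly_Mapping.lookup (mon ww + M0) ww" by simp
    with that show False by (simp add: lookup_add)
  qed
  have u0: "\<phi> 0 (cvar uu) = 0" using neq[of uu] by (simp add: \<phi>_def cvar_mon lookup_single when_def)
  have x0: "\<phi> 0 (cvar xx) = 0" using neq[of xx] Lnpos by (simp add: \<phi>_def cvar_mon lookup_single when_def)
  have U: "k \<le> l0 \<Longrightarrow> \<phi> k (cvar uu) = 0" for k
  proof (induction k)
    case 0 show ?case using u0 by simp
  next
    case (Suc k)
    then have "C k = 0" using C0 Cl[of k] by (cases k) auto
    with Suc show ?case by (simp add: F2)
  qed
  have Ul0: "\<phi> (Suc l0) (cvar uu) = ra * CM"
    using F2[of l0] U[of l0] Cl0 by simp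
  show "Poly_Mapping.lookup ((tder N L ^^ (l0 + 2)) (cvar xx)) (mon ww + M0) = rconst (Rc n (L n)) * rconst (Ra n (L n)) * CM"
    using F3[of "Suc l0"] Ul0 unfolding \<phi>_def ra_def rc_def by (simp add: mult.assoc)
  show "\<forall>l. 1 \<le> l \<and> l < l0 + 2 \<longrightarrow> Poly_Mapping.lookup ((tder N L ^^ l) (cvar xx)) (mon ww + M0) = 0"
  proof (intro allI impI)
    fix l assume l: "1 \<le> l \<and> l < l0 + 2"
    then obtain k where k: "l = Suc k" "k \<le> l0" by (cases l) auto
    show "Poly_Mapping.lookup ((tder N L ^^ l) (cvar xx)) (mon ww + M0) = 0"
      using F3[of k] U[OF k(2)] k(1) unfolding \<phi>_def by simp
  qed
qed

end



context casc
begin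

lemma upreact_reacts: "upreact P Q \<Longrightarrow> reacts N L P Q"
proof -
  assume "upreact P Q"
  then obtain k j where kj: "1 \<le> k" "k < n" "1 \<le> j" "j \<le> L k"
    "(P = Sprev L k \<and> Q = S k (j - 1)) \<or> (P = F k \<and> Q = S k j)" unfolding upreact_def by blast
  have kN: "k \<le> N" using kj nN by simp
  from kj(5) show ?thesis
  proof
    assume pq: "P = Sprev L k \<and> Q = S k (j - 1)"
    have "Ra k j \<in> Rset N L" using kj kN by (simp add: Rset_iff)
    then have "(rY L (Ra k j), rY' L (Ra k j), Ra k j) \<in> reactions N L" unfolding reactions_eq by blast
    then have "(cpx2 P Q, cpx1 (U k j), Ra k j) \<in> reactions N L" using pq by simp
    then show ?thesis using pq unfolding reacts_def by (intro conjI exI[of _ "U k j"] exI[of _ "Ra k j"]) auto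
  next
    assume pq: "P = F k \<and> Q = S k j"
    have "Rat k j \<in> Rset N L" using kj kN by (simp add: Rset_iff)
    then have "(rY L (Rat k j), rY' L (Rat k j), Rat k j) \<in> reactions N L" unfolding reactions_eq by blast
    then have "(cpx2 P Q, cpx1 (V k j), Rat k j) \<in> reactions N L" using pq by simp
    then show ?thesis using pq unfolding reacts_def by (intro conjI exI[of _ "V k j"] exI[of _ "Rat k j"]) auto
  qed
qed

lemma target_notZZ:
  fixes M :: complex
  assumes sp: "\<forall>X\<in>Poly_Mapping.keys M. in_upper_layers L n X"
    and sq: "square_free M"
    and ntp: "\<not> (\<exists>X1\<in>Poly_Mapping.keys M. \<exists>X2\<in>Poly_Mapping.keys M. \<exists>X3\<in>Poly_Mapping.keys M. \<exists>X4\<in>Poly_Mapping.keys M.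
            distinct [X1, X2, X3, X4] \<and> reacts N L X1 X2 \<and> reacts N L X3 X4)"
    and dc: "Poly_Mapping.lookup M A \<ge> 1 \<longrightarrow>
            (\<forall>X1\<in>Poly_Mapping.keys M. \<forall>X2\<in>Poly_Mapping.keys M. reacts N L X1 X2 \<longrightarrow> X1 = A \<or> X2 = A)"
  shows "\<not> ZZ (Poly_Mapping.lookup (mon ww + M))"
proof -
  define g where "g = Poly_Mapping.lookup (mon ww + M)"
  have up: "layer Y < n \<and> \<not> intermediate Y" if "1 \<le> Poly_Mapping.lookup M Y" for Y
  proof -
    have "Y \<in> Poly_Mapping.keys M" using that by (simp add: in_keys_iff)
    with sp have "in_upper_layers L n Y" by blast
    then show ?thesis using n2 by (auto simp: in_upper_layers_def)
  qed
  have M1: "Poly_Mapping.lookup M Y \<le> 1" for Y using sq by (simp add: square_free_def)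
  have gY: "g Y = (if Y = ww then 1 else 0) + Poly_Mapping.lookup M Y" for Y
    by (simp add: g_def lookup_add)
  have Mww: "Poly_Mapping.lookup M ww = 0" using up[of ww] by (cases "Poly_Mapping.lookup M ww") auto
  have hi: "Y = ww" if "1 \<le> g Y" "n \<le> layer Y" for Y
  proof (rule ccontr)
    assume "Y \<noteq> ww"
    then have "1 \<le> Poly_Mapping.lookup M Y" using that gY[of Y] by simp
    with up[of Y] that show False by simp
  qed
  have nz2: "\<not> z2 g"
  proof
    assume "z2 g"
    then obtain Y1 Y2 where Y: "Dsp Y1" "Dsp Y2" "lep (mon Y1 + mon Y2) g" unfolding z2_def by blast
    show False
    proof (cases "Y1 = Y2")
      case True
      then have "2 \<le> g Y1" using Y(3) by (simp add: lep_mon2)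
      moreover then have "Y1 = ww" using hi Y(1) by (simp add: Dsp_def)
      ultimately show False using gY[of ww] Mww by simp
    next
      case False
      then have "1 \<le> g Y1" "1 \<le> g Y2" using Y(3) by (simp_all add: lep_mon2)
      then have "Y1 = ww" "Y2 = ww" using hi Y by (auto simp: Dsp_def)
      with False show False by simp
    qed
  qed
  have nzd: "\<not> zdead g"
  proof
    assume "zdead g"
    then obtain Y where Y: "dead Y" "1 \<le> g Y" unfolding zdead_def by blast
    have "n \<le> layer Y" using Y(1) by (auto simp: dead_def)
    then have "Y = ww" using hi Y(2) by simp
    with Y(1) show False by (simp add: dead_def)
  qed
  have nR: "\<not> hasR g"
  proof
    assume "hasR g"
    then obtain Y where Y: "Rsp Y" "1 \<le> g Y" unfolding hasR_def by blast
    have "n \<le> layer Y" using Y(1) by (auto simp: Rsp_def)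
    then have "Y = ww" using hi Y(2) by simp
    with Y(1) show False by (simp add: Rsp_def)
  qed
  have nw2: "\<not> w2 g"
  proof
    assume "w2 g"
    then obtain c1 c2 where c: "wit c1" "wit c2" "lep (c1 + c2) g" unfolding w2_def by blast
    have lM: "Poly_Mapping.lookup (c1 + c2) Y \<le> Poly_Mapping.lookup M Y" for Y
    proof (cases "Poly_Mapping.lookup (c1 + c2) Y = 0")
      case False
      then have "1 \<le> Poly_Mapping.lookup c1 Y \<or> 1 \<le> Poly_Mapping.lookup c2 Y" by (auto simp: lookup_add)
      then have "layer Y < n" using wit_nonD c by blast
      then have "Y \<noteq> ww" by auto
      then show ?thesis using c(3) gY[of Y] unfolding lep_def by (metis add_0)
    qed simp
    have key: "\<And>Y. 1 \<le> Poly_Mapping.lookup (c1 + c2) Y \<Longrightarrow> Y \<in> Poly_Mapping.keys M \<and> \<not> intermediate Y"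
    proof -
      fix Y assume "1 \<le> Poly_Mapping.lookup (c1 + c2) Y"
      then have "1 \<le> Poly_Mapping.lookup M Y" using lM[of Y] by simp
      then show "Y \<in> Poly_Mapping.keys M \<and> \<not> intermediate Y" using up[of Y] by (simp add: in_keys_iff)
    qed
    have form: "c = mon A \<or> (\<exists>P Q. upreact P Q \<and> c = mon P + mon Q)" if "wit c" "c = c1 \<or> c = c2" for c
    proof -
      have "\<not> (\<exists>Z. upint Z \<and> c = mon Z)"
      proof
        assume "\<exists>Z. upint Z \<and> c = mon Z"
        then obtain Z where Z: "upint Z" "c = mon Z" by blast
        then have "1 \<le> Poly_Mapping.lookup (c1 + c2) Z" using that(2) by (auto simp: lookup_add)
        with key[of Z] Z(1) show False by (simp add: upint_def)
      qed
      with that(1) show ?thesis unfolding wit_def by blast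
    qed
    have upr: "P \<in> Poly_Mapping.keys M \<and> Q \<in> Poly_Mapping.keys M" if "c = mon P + mon Q" "c = c1 \<or> c = c2" for c P Q
      using key[of P] key[of Q] that by (auto simp: lookup_add)
    show False
    proof (cases "c1 = mon A")
      case c1A: True
      show False
      proof (cases "c2 = mon A")
        case True
        with c1A lM[of A] M1[of A] show False by (simp add: lookup_add)
      next
        case False
        with form[OF c(2)] obtain P Q where PQ: "upreact P Q" "c2 = mon P + mon Q" by blast
        have "1 \<le> Poly_Mapping.lookup M A" using lM[of A] c1A by (simp add: lookup_add)
        moreover have "P \<in> Poly_Mapping.keys M" "Q \<in> Poly_Mapping.keys M" using upr[OF PQ(2)] by simp_all
        ultimately have "P = A \<or> Q = A" using dc upreact_reacts[OF PQ(1)] by blast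
        then have "2 \<le> Poly_Mapping.lookup (c1 + c2) A" using c1A PQ(2) by (auto simp: lookup_add)
        with lM[of A] M1[of A] show False by simp
      qed
    next
      case c1n: False
      with form[OF c(1)] obtain P1 Q1 where PQ1: "upreact P1 Q1" "c1 = mon P1 + mon Q1" by blast
      show False
      proof (cases "c2 = mon A")
        case True
        have "1 \<le> Poly_Mapping.lookup M A" using lM[of A] True by (simp add: lookup_add)
        moreover have "P1 \<in> Poly_Mapping.keys M" "Q1 \<in> Poly_Mapping.keys M" using upr[OF PQ1(2)] by simp_all
        ultimately have "P1 = A \<or> Q1 = A" using dc upreact_reacts[OF PQ1(1)] by blast
        then have "2 \<le> Poly_Mapping.lookup (c1 + c2) A" using True PQ1(2) by (auto simp: lookup_add)
        with lM[of A] M1[of A] show False by simp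
      next
        case False
        with form[OF c(2)] obtain P2 Q2 where PQ2: "upreact P2 Q2" "c2 = mon P2 + mon Q2" by blast
        have le1: "Poly_Mapping.lookup (mon P1 + mon Q1 + (mon P2 + mon Q2)) Y \<le> 1" for Y
          using lM[of Y] M1[of Y] PQ1(2) PQ2(2) by simp
        have "distinct [P1, Q1, P2, Q2]"
          using le1[of P1] le1[of Q1] le1[of P2] le1[of Q2] by (auto simp: lookup_add split: if_splits)
        moreover have "P1 \<in> Poly_Mapping.keys M" "Q1 \<in> Poly_Mapping.keys M" using upr[OF PQ1(2)] by simp_all
        moreover have "P2 \<in> Poly_Mapping.keys M" "Q2 \<in> Poly_Mapping.keys M" using upr[OF PQ2(2)] by simp_all
        ultimately show False using ntp upreact_reacts[OF PQ1(1)] upreact_reacts[OF PQ2(1)] by blast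
      qed
    qed
  qed
  show ?thesis using nz2 nzd nR nw2 unfolding ZZ_def zR_def zw2_def g_def by blast
qed

end

lemma rconst_mult_nz:
  assumes "CM \<noteq> (0::rpoly)"
  shows "rconst a * rconst b * CM \<noteq> 0"
proof -
  obtain k where k: "Poly_Mapping.lookup CM k \<noteq> 0" using assms by (metis poly_mapping_eqI lookup_zero)
  have "rconst a * rconst b * CM = Poly_Mapping.single (Poly_Mapping.single a 1 + Poly_Mapping.single b 1) 1 * CM"
    by (simp add: rconst_def mult_single)
  then have "Poly_Mapping.lookup (rconst a * rconst b * CM) (Poly_Mapping.single a 1 + Poly_Mapping.single b 1 + k) = Poly_Mapping.lookup CM k"
    by (simp add: lookup_single_mult)
  with k show ?thesis by auto
qed

theorem mainTheorem17:
  fixes N n l0 :: nat and L :: "nat \<Rightarrow> nat" and M :: complex and CM :: rpoly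
  assumes N_pos: "1 \<le> N"
    and L_pos: "\<forall>m\<in>{1..N}. 1 \<le> L m"
    and n_range: "2 \<le> n" "n \<le> N"
    and l0_pos: "1 \<le> l0"
    and appears_l0: "appears M (iterder N L l0 (S (n - 1) (L (n - 1))))"
    and not_before: "\<forall>l. 1 \<le> l \<and> l < l0 \<longrightarrow> \<not> appears M (iterder N L l (S (n - 1) (L (n - 1))))"
    and coeff: "CM = Poly_Mapping.lookup (iterder N L l0 (S (n - 1) (L (n - 1)))) M"
    and species_M: "\<forall>X\<in>Poly_Mapping.keys M. in_upper_layers L n X"
    and sqfree: "square_free M"
    and no_two_pairs: "\<not> (\<exists>X1\<in>Poly_Mapping.keys M. \<exists>X2\<in>Poly_Mapping.keys M. \<exists>X3\<in>Poly_Mapping.keys M. \<exists>X4\<in>Poly_Mapping.keys M.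
            distinct [X1, X2, X3, X4] \<and> reacts N L X1 X2 \<and> reacts N L X3 X4)"
    and div_cond: "Poly_Mapping.lookup M (S (n - 1) (L (n - 1))) \<ge> 1 \<longrightarrow>
            (\<forall>X1\<in>Poly_Mapping.keys M. \<forall>X2\<in>Poly_Mapping.keys M. reacts N L X1 X2 \<longrightarrow>
               X1 = S (n - 1) (L (n - 1)) \<or> X2 = S (n - 1) (L (n - 1)))"
  shows "appears (Poly_Mapping.single (S n (L n - 1)) 1 + M) (iterder N L (l0 + 2) (S n (L n)))
    \<and> (\<forall>l. 1 \<le> l \<and> l < l0 + 2 \<longrightarrow>
          \<not> appears (Poly_Mapping.single (S n (L n - 1)) 1 + M) (iterder N L l (S n (L n))))
    \<and> Poly_Mapping.lookup (iterder N L (l0 + 2) (S n (L n))) (Poly_Mapping.single (S n (L n - 1)) 1 + M)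
        = rconst (Rc n (L n)) * rconst (Ra n (L n)) * CM"
proof -
  interpret casc N L n
    using n_range L_pos by unfold_locales auto
  have e1: "iterder N L l (S (n - 1) (L (n - 1))) = (tder N L ^^ l) (cvar A)" for l
    by (simp add: iterder_def)
  have e2: "iterder N L l (S n (L n)) = (tder N L ^^ l) (cvar xx)" for l
    by (simp add: iterder_def)
  have e3: "Poly_Mapping.single (S n (L n - 1)) 1 + M = mon ww + M" by (simp add: mon_def)
  have nz: "\<not> ZZ (Poly_Mapping.lookup (mon ww + M))"
    using target_notZZ[OF species_M sqfree no_two_pairs] div_cond by simp
  have app: "Poly_Mapping.lookup ((tder N L ^^ l0) (cvar A)) M \<noteq> 0"
    using appears_l0 unfolding appears_def e1 .
  have nb: "\<forall>l. 1 \<le> l \<and> l < l0 \<longrightarrow> Poly_Mapping.lookup ((tder N L ^^ l) (cvar A)) M = 0"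
    using not_before unfolding appears_def e1 by blast
  have cm: "CM = Poly_Mapping.lookup ((tder N L ^^ l0) (cvar A)) M"
    using coeff unfolding e1 .
  note R = main_locale[OF nz l0_pos app nb cm]
  have CMnz: "CM \<noteq> 0" using app cm by simp
  show ?thesis
    unfolding appears_def e2 e3
    using R rconst_mult_nz[OF CMnz] by simp
qed

end
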